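(* Each of the following two verification condition providers yields lower bounds for $\mathrm{awp}$ and is preserved by $\mathrm{trans}^{\succeq}_{\mathrm{awp}}$: (1) $\mathsf{dASTSUBINV}$, where for $C=\mathtt{while}(\varphi)\{C_{\mathrm{body}}\}[I]$ and $f\in\mathbb{E}$, $\mathsf{dASTSUBINV}(C,f)=\mathsf{true}$ iff $[\varphi]\cdot\mathrm{awp}^*[\![C_{\mathrm{body}}]\!](I)+[\neg\varphi]\cdot f\ge I$, $C$ is dAST, and $I$ and $f$ are bounded by some constant $b\in\mathbb{R}_{\ge0}$; (2) $\mathsf{dPASTSUBINV}$, where for $C=\mathtt{while}(\varphi)\{C_{\mathrm{body}}\}[I]$ and $f\in\mathbb{E}$, $\mathsf{dPASTSUBINV}(C,f)=\mathsf{true}$ iff $[\varphi]\cdot\mathrm{awp}^*[\![C_{\mathrm{body}}]\!](I)+[\neg\varphi]\cdot f\ge I$, $C$ is dPAST, and $C$ is suitable for optional stopping w.r.t. $f$.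
   Context: States: fix a countably infinite set of program variables with values in $\mathbb{Q}_{\ge 0}$; a state is a map $\sigma$ from variables to $\mathbb{Q}_{\ge0}$ which is $0$ for all but finitely many variables; $\mathsf{States}$ is the set of states. A predicate is a map $\varphi:\mathsf{States}\to\{\mathsf{true},\mathsf{false}\}$; $\varphi\models\psi$ means every state satisfying $\varphi$ satisfies $\psi$; $\models\varphi$ means $\varphi$ holds in every state; $\varphi\Rightarrow\psi$ is the usual implication. Expectations: $\mathbb{E}$ is the set of maps $\mathsf{States}\to[0,\infty]$, ordered pointwise; $+,\cdot$ pointwise with $0\cdot\infty=0$; $\sqcap,\sqcup$ pointwise min/max; $[\varphi]$ Iverson bracket; $(\varphi\to g)(\sigma)=g(\sigma)$ if $\sigma\models\varphi$, else $\infty$; $f[x/E](\sigma)=f(\sigma[x\mapsto E(\sigma)])$; $f$ is bounded by $b$ if $f(\sigma)\le b$ for all $\sigma$. Programs of $\mathsf{pGCL}$: $C ::= \mathtt{skip} \mid x:=E \mid C;C \mid \mathtt{if}\ \varphi_1\to C\ \square\ \varphi_2\to C \mid \{C\}[p]\{C\} \mid \mathtt{while}(\varphi)\{C\}[I]$, where $E:\mathsf{States}\to\mathbb{Q}_{\ge0}$, $p:\mathsf{States}\to[0,1]$, in every guarded choice $\varphi_1\vee\varphi_2$ is valid (when both hold the choice is nondeterministic), and every loop carries an invariant annotation $I\in\mathbb{E}$. Weakest preexpectations for $\mathcal{T}\in\{\mathrm{dwp},\mathrm{awp}\}$: $\mathcal{T}[\![\mathtt{skip}]\!](f)=f$; $\mathcal{T}[\![x:=E]\!](f)=f[x/E]$;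 $\mathcal{T}[\![C_1;C_2]\!](f)=\mathcal{T}[\![C_1]\!](\mathcal{T}[\![C_2]\!](f))$; $\mathrm{dwp}$ of a guarded choice: $(\varphi_1\to\mathrm{dwp}[\![C_1]\!](f))\sqcap(\varphi_2\to\mathrm{dwp}[\![C_2]\!](f))$; $\mathrm{awp}$ of a guarded choice: $[\varphi_1]\cdot\mathrm{awp}[\![C_1]\!](f)\sqcup[\varphi_2]\cdot\mathrm{awp}[\![C_2]\!](f)$; $\mathcal{T}[\![\{C_1\}[p]\{C_2\}]\!](f)=p\cdot\mathcal{T}[\![C_1]\!](f)+(1-p)\cdot\mathcal{T}[\![C_2]\!](f)$; loops: least fixpoint of $g\mapsto[\neg\varphi]\cdot f+[\varphi]\cdot\mathcal{T}[\![C']\!](g)$. $\mathrm{awp}^*$ follows the $\mathrm{awp}$ rules except $\mathrm{awp}^*[\![\mathtt{while}(\varphi)\{C'\}[I]]\!](f)=I$. Termination notions: $C$ is dAST (demonically almost-surely terminating) if $\mathrm{dwp}[\![C]\!](1)=1$. $C$ is dPAST (positively demonically almost-surely terminating) if its expected runtime (in the sense of the expected-runtime calculus of Kaminski et al., where nondeterminism is resolved in the worst case, i.e. maximizing runtime) is finite for all initial states. A loop $\mathtt{while}(\varphi)\{C_{\mathrm{body}}\}[I]$ is suitable for optional stopping w.r.t. $f$ if (i) $I=[\varphi]\cdot I'+[\neg\varphi]\cdot f$ for some $I'\in\mathbb{E}$, (ii) $f$, $I$ and $[\varphi]\cdot\mathrm{awp}[\![C_{\mathrm{body}}]\!](I)+[\neg\varphi]\cdot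 f$ are all pointwise $<\infty$, and (iii) there is $b\in\mathbb{R}_{\ge0}$ such that for all states $\sigma$, $([\varphi]\cdot\mathrm{awp}[\![C_{\mathrm{body}}]\!](\lambda\tau.|I(\tau)-I(\sigma)|))(\sigma)\le b$. Implementation relation $\multimap$: smallest partial order on $\mathsf{pGCL}$ closed under: if $C_1'\multimap C_1$, $C_2'\multimap C_2$ then $C_1';C_2'\multimap C_1;C_2$ and $\{C_1'\}[p]\{C_2'\}\multimap\{C_1\}[p]\{C_2\}$; if moreover $\varphi_1'\models\varphi_1$, $\varphi_2'\models\varphi_2$, $\models\varphi_1'\vee\varphi_2'$ then $\mathtt{if}\ \varphi_1'\to C_1'\ \square\ \varphi_2'\to C_2'\multimap\mathtt{if}\ \varphi_1\to C_1\ \square\ \varphi_2\to C_2$; if $C'\multimap C$ then $\mathtt{while}(\varphi)\{C'\}\multimap\mathtt{while}(\varphi)\{C\}$. Verification conditions: a provider $\mathfrak{C}$ maps annotated loops and $f\in\mathbb{E}$ to truth values; $\mathrm{vc}^{\mathfrak{C},\mathrm{awp}}[\![C]\!](f)$: $\mathsf{true}$ for $\mathtt{skip}$ and assignments; $\mathrm{vc}[\![C_1]\!](\mathrm{awp}^*[\![C_2]\!](f))\wedge\mathrm{vc}[\![C_2]\!](f)$ for $C_1;C_2$; $\mathrm{vc}[\![C_1]\!](f)\wedge\mathrm{vc}[\![C_2]\!](f)$ for guarded and probabilistic choices; $\mathfrak{C}(\mathtt{while}(\varphi)\{C'\}[I],f)\wedge\mathrm{vc}[\![C']\!](I)$ for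 loops. $\mathfrak{C}$ yields lower bounds for $\mathrm{awp}$ if for all $C\in\mathsf{pGCL}$, $f\in\mathbb{E}$, $\mathrm{vc}^{\mathfrak{C},\mathrm{awp}}[\![C]\!](f)$ implies $\mathrm{awp}[\![C]\!](f)\ge\mathrm{awp}^*[\![C]\!](f)$. Transformer $\mathrm{trans}^{\succeq}_{\mathrm{awp}}$ (with $f\succeq g$ the predicate true at $\sigma$ iff $f(\sigma)\ge g(\sigma)$): $\mathtt{skip}$, assignments unchanged; $C_1;C_2\mapsto \mathrm{trans}[\![C_1]\!](\mathrm{awp}^*[\![C_2]\!](f));\mathrm{trans}[\![C_2]\!](f)$; $\mathtt{if}\ \varphi_1\to C_1\ \square\ \varphi_2\to C_2\mapsto\mathtt{if}\ \psi_1\to\mathrm{trans}[\![C_1]\!](f)\ \square\ \psi_2\to\mathrm{trans}[\![C_2]\!](f)$ with $\psi_1=\varphi_1\wedge(\varphi_2\Rightarrow\mathrm{awp}^*[\![C_1]\!](f)\succeq\mathrm{awp}^*[\![C_2]\!](f))$, $\psi_2=\varphi_2\wedge(\varphi_1\Rightarrow\mathrm{awp}^*[\![C_2]\!](f)\succeq\mathrm{awp}^*[\![C_1]\!](f))$; probabilistic choice transformed branchwise; $\mathtt{while}(\varphi)\{C'\}[I]\mapsto\mathtt{while}(\varphi)\{\mathrm{trans}[\![C']\!](I)\}[I]$. $\mathrm{trans}^{\succeq}_{\mathrm{awp}}$ preserves $\mathfrak{C}$ if for all $C,C'$, $f$: $\mathrm{vc}^{\mathfrak{C},\mathrm{awp}}[\![C]\!](f)$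 and $C'\multimap\mathrm{trans}^{\succeq}_{\mathrm{awp}}[\![C]\!](f)$ imply $\mathrm{vc}^{\mathfrak{C},\mathrm{awp}}[\![C']\!](f)$. *)

theory Defs
  imports Complex_Main "HOL-Library.Extended_Nonnegative_Real"
begin

typedef nnrat = "{q :: rat. 0 \<le> q}" by auto

typedef state = "{\<sigma> :: nat \<Rightarrow> rat. (\<forall>x. 0 \<le> \<sigma> x) \<and> finite {x. \<sigma> x \<noteq> 0}}"
  by (rule exI[of _ "\<lambda>_. 0"]) auto

typedef prob = "{p :: real. 0 \<le> p \<and> p \<le> 1}" by auto

type_synonym pred = "state \<Rightarrow> bool"
type_synonym expect = "state \<Rightarrow> ennreal"

definition upd :: "state \<Rightarrow> nat \<Rightarrow> nnrat \<Rightarrow> state" where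
  "upd \<sigma> x q = Abs_state ((Rep_state \<sigma>)(x := Rep_nnrat q))"

definition iver :: "pred \<Rightarrow> expect" where
  "iver \<phi> \<sigma> = (if \<phi> \<sigma> then 1 else 0)"

definition guardto :: "pred \<Rightarrow> expect \<Rightarrow> expect" where
  "guardto \<phi> g \<sigma> = (if \<phi> \<sigma> then g \<sigma> else \<infinity>)"

definition subst :: "expect \<Rightarrow> nat \<Rightarrow> (state \<Rightarrow> nnrat) \<Rightarrow> expect" where
  "subst f x E \<sigma> = f (upd \<sigma> x (E \<sigma>))"

definition succeq :: "expect \<Rightarrow> expect \<Rightarrow> pred" where
  "succeq f g \<sigma> = (f \<sigma> \<ge> g \<sigma>)"

definition pr :: "(state \<Rightarrow> prob) \<Rightarrow> state \<Rightarrow> ennreal" where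
  "pr p \<sigma> = ennreal (Rep_prob (p \<sigma>))"

definition npr :: "(state \<Rightarrow> prob) \<Rightarrow> state \<Rightarrow> ennreal" where
  "npr p \<sigma> = ennreal (1 - Rep_prob (p \<sigma>))"

datatype prog =
    Skip
  | Assign nat "state \<Rightarrow> nnrat"
  | Seq prog prog
  | GChoice pred prog pred prog
  | PChoice prog "state \<Rightarrow> prob" prog
  | While pred prog expect  \<comment> \<open>while(phi){C}[I]\<close>

text \<open>Membership in pGCL: in every guarded choice phi1 \/ phi2 is valid.\<close>
primrec wf_prog :: "prog \<Rightarrow> bool" where
  "wf_prog Skip = True"
| "wf_prog (Assign x E) = True"
| "wf_prog (Seq C1 C2) = (wf_prog C1 \<and> wf_prog C2)"
| "wf_prog (GChoice \<phi>1 C1 \<phi>2 C2) = ((\<forall>\<sigma>. \<phi>1 \<sigma> \<or> \<phi>2 \<sigma>) \<and> wf_prog C1 \<and> wf_prog C2)"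
| "wf_prog (PChoice C1 p C2) = (wf_prog C1 \<and> wf_prog C2)"
| "wf_prog (While \<phi> C I) = wf_prog C"

primrec dwp :: "prog \<Rightarrow> expect \<Rightarrow> expect" where
  "dwp Skip f = f"
| "dwp (Assign x E) f = subst f x E"
| "dwp (Seq C1 C2) f = dwp C1 (dwp C2 f)"
| "dwp (GChoice \<phi>1 C1 \<phi>2 C2) f =
     (\<lambda>\<sigma>. min (guardto \<phi>1 (dwp C1 f) \<sigma>) (guardto \<phi>2 (dwp C2 f) \<sigma>))"
| "dwp (PChoice C1 p C2) f = (\<lambda>\<sigma>. pr p \<sigma> * dwp C1 f \<sigma> + npr p \<sigma> * dwp C2 f \<sigma>)"
| "dwp (While \<phi> C I) f =
     lfp (\<lambda>g \<sigma>. iver (\<lambda>\<tau>. \<not> \<phi> \<tau>) \<sigma> * f \<sigma> + iver \<phi> \<sigma> * dwp C g \<sigma>)"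

primrec awp :: "prog \<Rightarrow> expect \<Rightarrow> expect" where
  "awp Skip f = f"
| "awp (Assign x E) f = subst f x E"
| "awp (Seq C1 C2) f = awp C1 (awp C2 f)"
| "awp (GChoice \<phi>1 C1 \<phi>2 C2) f =
     (\<lambda>\<sigma>. max (iver \<phi>1 \<sigma> * awp C1 f \<sigma>) (iver \<phi>2 \<sigma> * awp C2 f \<sigma>))"
| "awp (PChoice C1 p C2) f = (\<lambda>\<sigma>. pr p \<sigma> * awp C1 f \<sigma> + npr p \<sigma> * awp C2 f \<sigma>)"
| "awp (While \<phi> C I) f =
     lfp (\<lambda>g \<sigma>. iver (\<lambda>\<tau>. \<not> \<phi> \<tau>) \<sigma> * f \<sigma> + iver \<phi> \<sigma> * awp C g \<sigma>)"

primrec awp_star :: "prog \<Rightarrow> expect \<Rightarrow> expect" where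
  "awp_star Skip f = f"
| "awp_star (Assign x E) f = subst f x E"
| "awp_star (Seq C1 C2) f = awp_star C1 (awp_star C2 f)"
| "awp_star (GChoice \<phi>1 C1 \<phi>2 C2) f =
     (\<lambda>\<sigma>. max (iver \<phi>1 \<sigma> * awp_star C1 f \<sigma>) (iver \<phi>2 \<sigma> * awp_star C2 f \<sigma>))"
| "awp_star (PChoice C1 p C2) f =
     (\<lambda>\<sigma>. pr p \<sigma> * awp_star C1 f \<sigma> + npr p \<sigma> * awp_star C2 f \<sigma>)"
| "awp_star (While \<phi> C I) f = I"

section \<open>Expected runtimes (Kaminski et al.), demonic = maximizing nondeterminism\<close>

primrec ert :: "prog \<Rightarrow> expect \<Rightarrow> expect" where
  "ert Skip t = (\<lambda>\<sigma>. 1 + t \<sigma>)"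
| "ert (Assign x E) t = (\<lambda>\<sigma>. 1 + subst t x E \<sigma>)"
| "ert (Seq C1 C2) t = ert C1 (ert C2 t)"
| "ert (GChoice \<phi>1 C1 \<phi>2 C2) t =
     (\<lambda>\<sigma>. 1 + max (iver \<phi>1 \<sigma> * ert C1 t \<sigma>) (iver \<phi>2 \<sigma> * ert C2 t \<sigma>))"
| "ert (PChoice C1 p C2) t = (\<lambda>\<sigma>. 1 + (pr p \<sigma> * ert C1 t \<sigma> + npr p \<sigma> * ert C2 t \<sigma>))"
| "ert (While \<phi> C I) t =
     lfp (\<lambda>X \<sigma>. 1 + (iver (\<lambda>\<tau>. \<not> \<phi> \<tau>) \<sigma> * t \<sigma> + iver \<phi> \<sigma> * ert C X \<sigma>))"

definition dAST :: "prog \<Rightarrow> bool" where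
  "dAST C \<longleftrightarrow> dwp C (\<lambda>_. 1) = (\<lambda>_. 1)"

definition dPAST :: "prog \<Rightarrow> bool" where
  "dPAST C \<longleftrightarrow> (\<forall>\<sigma>. ert C (\<lambda>_. 0) \<sigma> < \<infinity>)"

text \<open>|a - b| on [0,\<infinity>]; coincides with the usual absolute difference on finite values.\<close>
definition absdiff :: "ennreal \<Rightarrow> ennreal \<Rightarrow> ennreal" where
  "absdiff a b = (a - b) + (b - a)"

fun suitable_OST :: "prog \<Rightarrow> expect \<Rightarrow> bool" where
  "suitable_OST (While \<phi> Cb I) f \<longleftrightarrow>
     (\<exists>I'. I = (\<lambda>\<sigma>. iver \<phi> \<sigma> * I' \<sigma> + iver (\<lambda>\<tau>. \<not> \<phi> \<tau>) \<sigma> * f \<sigma>)) \<and>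
     (\<forall>\<sigma>. f \<sigma> < \<infinity> \<and> I \<sigma> < \<infinity> \<and>
          iver \<phi> \<sigma> * awp Cb I \<sigma> + iver (\<lambda>\<tau>. \<not> \<phi> \<tau>) \<sigma> * f \<sigma> < \<infinity>) \<and>
     (\<exists>b::real. 0 \<le> b \<and>
        (\<forall>\<sigma>. iver \<phi> \<sigma> * awp Cb (\<lambda>\<tau>. absdiff (I \<tau>) (I \<sigma>)) \<sigma> \<le> ennreal b))"
| "suitable_OST _ f \<longleftrightarrow> False"

inductive impl :: "prog \<Rightarrow> prog \<Rightarrow> bool" where
  impl_refl: "wf_prog C \<Longrightarrow> impl C C"
| impl_trans: "impl C1 C2 \<Longrightarrow> impl C2 C3 \<Longrightarrow> impl C1 C3"
| impl_seq: "impl C1' C1 \<Longrightarrow> impl C2' C2 \<Longrightarrow> impl (Seq C1' C2') (Seq C1 C2)"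
| impl_pchoice: "impl C1' C1 \<Longrightarrow> impl C2' C2 \<Longrightarrow> impl (PChoice C1' p C2') (PChoice C1 p C2)"
| impl_gchoice: "impl C1' C1 \<Longrightarrow> impl C2' C2 \<Longrightarrow>
    (\<forall>\<sigma>. \<phi>1' \<sigma> \<longrightarrow> \<phi>1 \<sigma>) \<Longrightarrow> (\<forall>\<sigma>. \<phi>2' \<sigma> \<longrightarrow> \<phi>2 \<sigma>) \<Longrightarrow> (\<forall>\<sigma>. \<phi>1' \<sigma> \<or> \<phi>2' \<sigma>) \<Longrightarrow>
    impl (GChoice \<phi>1' C1' \<phi>2' C2') (GChoice \<phi>1 C1 \<phi>2 C2)"
| impl_while: "impl C' C \<Longrightarrow> impl (While \<phi> C' I) (While \<phi> C I)"

type_synonym provider = "prog \<Rightarrow> expect \<Rightarrow> bool"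

primrec vc :: "provider \<Rightarrow> prog \<Rightarrow> expect \<Rightarrow> bool" where
  "vc P Skip f = True"
| "vc P (Assign x E) f = True"
| "vc P (Seq C1 C2) f = (vc P C1 (awp_star C2 f) \<and> vc P C2 f)"
| "vc P (GChoice \<phi>1 C1 \<phi>2 C2) f = (vc P C1 f \<and> vc P C2 f)"
| "vc P (PChoice C1 p C2) f = (vc P C1 f \<and> vc P C2 f)"
| "vc P (While \<phi> C I) f = (P (While \<phi> C I) f \<and> vc P C I)"

definition yields_lower_bounds_awp :: "provider \<Rightarrow> bool" where
  "yields_lower_bounds_awp P \<longleftrightarrow>
     (\<forall>C f. wf_prog C \<longrightarrow> vc P C f \<longrightarrow> awp C f \<ge> awp_star C f)"

primrec trans_awp :: "prog \<Rightarrow> expect \<Rightarrow> prog" where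
  "trans_awp Skip f = Skip"
| "trans_awp (Assign x E) f = Assign x E"
| "trans_awp (Seq C1 C2) f = Seq (trans_awp C1 (awp_star C2 f)) (trans_awp C2 f)"
| "trans_awp (GChoice \<phi>1 C1 \<phi>2 C2) f =
     GChoice (\<lambda>\<sigma>. \<phi>1 \<sigma> \<and> (\<phi>2 \<sigma> \<longrightarrow> succeq (awp_star C1 f) (awp_star C2 f) \<sigma>)) (trans_awp C1 f)
             (\<lambda>\<sigma>. \<phi>2 \<sigma> \<and> (\<phi>1 \<sigma> \<longrightarrow> succeq (awp_star C2 f) (awp_star C1 f) \<sigma>)) (trans_awp C2 f)"
| "trans_awp (PChoice C1 p C2) f = PChoice (trans_awp C1 f) p (trans_awp C2 f)"
| "trans_awp (While \<phi> C I) f = While \<phi> (trans_awp C I) I"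

definition trans_preserves :: "provider \<Rightarrow> bool" where
  "trans_preserves P \<longleftrightarrow>
     (\<forall>C C' f. wf_prog C \<longrightarrow> vc P C f \<longrightarrow> impl C' (trans_awp C f) \<longrightarrow> vc P C' f)"

fun dASTSUBINV :: provider where
  "dASTSUBINV (While \<phi> Cb I) f \<longleftrightarrow>
     (\<forall>\<sigma>. iver \<phi> \<sigma> * awp_star Cb I \<sigma> + iver (\<lambda>\<tau>. \<not> \<phi> \<tau>) \<sigma> * f \<sigma> \<ge> I \<sigma>) \<and>
     dAST (While \<phi> Cb I) \<and>
     (\<exists>b::real. 0 \<le> b \<and> (\<forall>\<sigma>. I \<sigma> \<le> ennreal b \<and> f \<sigma> \<le> ennreal b))"
| "dASTSUBINV _ f \<longleftrightarrow> False"

fun dPASTSUBINV :: provider where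
  "dPASTSUBINV (While \<phi> Cb I) f \<longleftrightarrow>
     (\<forall>\<sigma>. iver \<phi> \<sigma> * awp_star Cb I \<sigma> + iver (\<lambda>\<tau>. \<not> \<phi> \<tau>) \<sigma> * f \<sigma> \<ge> I \<sigma>) \<and>
     dPAST (While \<phi> Cb I) \<and>
     suitable_OST (While \<phi> Cb I) f"
| "dPASTSUBINV _ f \<longleftrightarrow> False"

end

theory Submission
  imports Defs
begin


fun rf :: "prog \<Rightarrow> prog \<Rightarrow> bool" where
  "rf Skip Skip = True"
| "rf (Assign x E) (Assign y F) = (x = y \<and> E = F)"
| "rf (Seq a b) (Seq c d) = (rf a c \<and> rf b d)"
| "rf (GChoice p1 a p2 b) (GChoice q1 c q2 d) =
     ((\<forall>\<sigma>. p1 \<sigma> \<longrightarrow> q1 \<sigma>) \<and> (\<forall>\<sigma>. p2 \<sigma> \<longrightarrow> q2 \<sigma>) \<and> (\<forall>\<sigma>. p1 \<sigma> \<or> p2 \<sigma>) \<and> rf a c \<and> rf b d)"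
| "rf (PChoice a p b) (PChoice c q d) = (p = q \<and> rf a c \<and> rf b d)"
| "rf (While \<phi> a I) (While \<psi> c J) = (\<phi> = \<psi> \<and> I = J \<and> rf a c)"
| "rf _ _ = False"

lemma rf_refl: "wf_prog C \<Longrightarrow> rf C C"
  by (induction C) auto

lemma rf_wf: "rf C' C \<Longrightarrow> wf_prog C'"
  by (induction C' C rule: rf.induct) auto

lemma rf_trans: "rf a b \<Longrightarrow> rf b c \<Longrightarrow> rf a c"
proof (induction a arbitrary: b c)
  case Skip then show ?case by (cases b; cases c) auto
next
  case (Assign x E) then show ?case by (cases b; cases c) auto
next
  case (Seq a1 a2) then show ?case by (cases b; cases c) auto
next
  case (GChoice p1 a1 p2 a2) then show ?case by (cases b; cases c) auto
next
  case (PChoice a1 p a2) then show ?case by (cases b; cases c) auto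
next
  case (While \<phi> a I) then show ?case by (cases b; cases c) auto
qed

lemma impl_rf: "impl C' C \<Longrightarrow> rf C' C"
  by (induction rule: impl.induct) (auto intro: rf_refl rf_trans)

lemma trans_rf: "wf_prog C \<Longrightarrow> rf (trans_awp C f) C"
proof (induction C arbitrary: f)
  case (GChoice p1 a p2 b)
  then show ?case by (auto simp: succeq_def)
qed (auto intro: rf_refl)

primrec isdet :: "prog \<Rightarrow> bool" where
  "isdet Skip = True"
| "isdet (Assign x E) = True"
| "isdet (Seq a b) = (isdet a \<and> isdet b)"
| "isdet (GChoice p1 a p2 b) = ((\<forall>\<sigma>. \<not> (p1 \<sigma> \<and> p2 \<sigma>)) \<and> isdet a \<and> isdet b)"
| "isdet (PChoice a p b) = (isdet a \<and> isdet b)"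
| "isdet (While \<phi> a I) = isdet a"

primrec detp :: "prog \<Rightarrow> prog" where
  "detp Skip = Skip"
| "detp (Assign x E) = Assign x E"
| "detp (Seq a b) = Seq (detp a) (detp b)"
| "detp (GChoice p1 a p2 b) = GChoice p1 (detp a) (\<lambda>\<sigma>. p2 \<sigma> \<and> \<not> p1 \<sigma>) (detp b)"
| "detp (PChoice a p b) = PChoice (detp a) p (detp b)"
| "detp (While \<phi> a I) = While \<phi> (detp a) I"

lemma detp_rf: "wf_prog C \<Longrightarrow> rf (detp C) C"
  by (induction C) auto

lemma detp_isdet: "isdet (detp C)"
  by (induction C) auto

lemma awp_star_trans:
  "rf C' (trans_awp C f) \<Longrightarrow> awp_star C' f = awp_star C f"
proof (induction C arbitrary: C' f)
  case Skip then show ?case by (cases C') auto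
next
  case (Assign x E) then show ?case by (cases C') auto
next
  case (Seq C1 C2) then show ?case by (cases C') auto
next
  case (GChoice p1 C1 p2 C2)
  then obtain q1 D1 q2 D2 where C': "C' = GChoice q1 D1 q2 D2" by (cases C') auto
  with GChoice.prems have h: "\<forall>\<sigma>. q1 \<sigma> \<longrightarrow> p1 \<sigma> \<and> (p2 \<sigma> \<longrightarrow> awp_star C1 f \<sigma> \<ge> awp_star C2 f \<sigma>)"
     "\<forall>\<sigma>. q2 \<sigma> \<longrightarrow> p2 \<sigma> \<and> (p1 \<sigma> \<longrightarrow> awp_star C2 f \<sigma> \<ge> awp_star C1 f \<sigma>)"
     "\<forall>\<sigma>. q1 \<sigma> \<or> q2 \<sigma>" "rf D1 (trans_awp C1 f)" "rf D2 (trans_awp C2 f)"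
    by (auto simp: succeq_def)
  have e1: "awp_star D1 f = awp_star C1 f" using GChoice.IH(1) h(4) by blast
  have e2: "awp_star D2 f = awp_star C2 f" using GChoice.IH(2) h(5) by blast
  show ?case
  proof
    fix \<sigma>
    show "awp_star C' f \<sigma> = awp_star (GChoice p1 C1 p2 C2) f \<sigma>"
      using h(1)[rule_format, of \<sigma>] h(2)[rule_format, of \<sigma>] h(3)[rule_format, of \<sigma>]
      by (auto simp: C' e1 e2 iver_def max_def)
  qed
next
  case (PChoice C1 p C2) then show ?case by (cases C') auto
next
  case (While \<phi> C I) then show ?case by (cases C') auto
qed



definition Fa :: "pred \<Rightarrow> prog \<Rightarrow> expect \<Rightarrow> expect \<Rightarrow> expect" where
  "Fa \<phi> C f = (\<lambda>g \<sigma>. iver (\<lambda>\<tau>. \<not> \<phi> \<tau>) \<sigma> * f \<sigma> + iver \<phi> \<sigma> * awp C g \<sigma>)"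
definition Fd :: "pred \<Rightarrow> prog \<Rightarrow> expect \<Rightarrow> expect \<Rightarrow> expect" where
  "Fd \<phi> C f = (\<lambda>g \<sigma>. iver (\<lambda>\<tau>. \<not> \<phi> \<tau>) \<sigma> * f \<sigma> + iver \<phi> \<sigma> * dwp C g \<sigma>)"
definition Fe :: "pred \<Rightarrow> prog \<Rightarrow> expect \<Rightarrow> expect \<Rightarrow> expect" where
  "Fe \<phi> C t = (\<lambda>X \<sigma>. 1 + (iver (\<lambda>\<tau>. \<not> \<phi> \<tau>) \<sigma> * t \<sigma> + iver \<phi> \<sigma> * ert C X \<sigma>))"

lemma awp_While: "awp (While \<phi> C I) f = lfp (Fa \<phi> C f)" by (simp add: Fa_def)
lemma dwp_While: "dwp (While \<phi> C I) f = lfp (Fd \<phi> C f)" by (simp add: Fd_def)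
lemma ert_While: "ert (While \<phi> C I) f = lfp (Fe \<phi> C f)" by (simp add: Fe_def)

declare awp.simps(6)[simp del] dwp.simps(6)[simp del] ert.simps(6)[simp del]

lemma iver_simps[simp]: "\<phi> \<sigma> \<Longrightarrow> iver \<phi> \<sigma> = 1" "\<not> \<phi> \<sigma> \<Longrightarrow> iver \<phi> \<sigma> = 0"
  by (auto simp: iver_def)

lemma awp_mono_pt: "\<forall>g h. (\<forall>\<sigma>. g \<sigma> \<le> h \<sigma>) \<longrightarrow> (\<forall>\<sigma>. awp C g \<sigma> \<le> awp C h \<sigma>)"
proof (induction C)
  case (Assign x E) then show ?case by (auto simp: subst_def)
next
  case (Seq C1 C2) then show ?case by simp
next
  case (GChoice p1 C1 p2 C2)
  show ?case
  proof (intro allI impI)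
    fix g h :: expect and \<sigma> assume a: "\<forall>\<sigma>. g \<sigma> \<le> h \<sigma>"
    have "awp C1 g \<sigma> \<le> awp C1 h \<sigma>" "awp C2 g \<sigma> \<le> awp C2 h \<sigma>" using GChoice a by blast+
    then show "awp (GChoice p1 C1 p2 C2) g \<sigma> \<le> awp (GChoice p1 C1 p2 C2) h \<sigma>"
      by (auto simp: iver_def le_max_iff_disj intro: max.mono)
  qed
next
  case (PChoice C1 p C2)
  then show ?case by (auto intro!: add_mono mult_left_mono)
next
  case (While \<phi> C I)
  show ?case
  proof (intro allI impI)
    fix g h :: expect and \<sigma> assume a: "\<forall>\<sigma>. g \<sigma> \<le> h \<sigma>"
    have "lfp (Fa \<phi> C g) \<le> lfp (Fa \<phi> C h)"
      apply (rule lfp_mono)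
      using a by (auto simp: Fa_def le_fun_def iver_def)
    then show "awp (While \<phi> C I) g \<sigma> \<le> awp (While \<phi> C I) h \<sigma>"
      unfolding awp_While by (auto simp: le_fun_def)
  qed
qed simp

lemma awp_mono': "(\<And>\<sigma>. g \<sigma> \<le> h \<sigma>) \<Longrightarrow> awp C g \<sigma> \<le> awp C h \<sigma>"
  using awp_mono_pt[of C] by blast

lemma awp_mono: "g \<le> h \<Longrightarrow> awp C g \<le> awp C h"
  by (auto simp: le_fun_def intro: awp_mono')

lemma mono_Fa: "mono (Fa \<phi> C f)"
  by (rule monoI) (auto simp: Fa_def le_fun_def iver_def intro: awp_mono')

lemma awp_While_unfold:
  "awp (While \<phi> C I) f \<sigma> = (if \<phi> \<sigma> then awp C (awp (While \<phi> C I) f) \<sigma> else f \<sigma>)"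
  unfolding awp_While
  by (subst lfp_unfold[OF mono_Fa]) (simp add: Fa_def)

lemma ert_mono_pt: "\<forall>g h. (\<forall>\<sigma>. g \<sigma> \<le> h \<sigma>) \<longrightarrow> (\<forall>\<sigma>. ert C g \<sigma> \<le> ert C h \<sigma>)"
proof (induction C)
  case (Assign x E) then show ?case by (auto simp: subst_def)
next
  case (Seq C1 C2) then show ?case by simp
next
  case (GChoice p1 C1 p2 C2)
  show ?case
  proof (intro allI impI)
    fix g h :: expect and \<sigma> assume a: "\<forall>\<sigma>. g \<sigma> \<le> h \<sigma>"
    have "ert C1 g \<sigma> \<le> ert C1 h \<sigma>" "ert C2 g \<sigma> \<le> ert C2 h \<sigma>" using GChoice a by blast+
    then show "ert (GChoice p1 C1 p2 C2) g \<sigma> \<le> ert (GChoice p1 C1 p2 C2) h \<sigma>"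
      by (auto simp: iver_def le_max_iff_disj intro!: add_left_mono max.mono)
  qed
next
  case (PChoice C1 p C2)
  then show ?case by (auto intro!: add_mono mult_left_mono)
next
  case (While \<phi> C I)
  show ?case
  proof (intro allI impI)
    fix g h :: expect and \<sigma> assume a: "\<forall>\<sigma>. g \<sigma> \<le> h \<sigma>"
    have "lfp (Fe \<phi> C g) \<le> lfp (Fe \<phi> C h)"
      apply (rule lfp_mono)
      using a by (auto simp: Fe_def le_fun_def iver_def)
    then show "ert (While \<phi> C I) g \<sigma> \<le> ert (While \<phi> C I) h \<sigma>"
      unfolding ert_While by (auto simp: le_fun_def)
  qed
qed (simp add: add_left_mono)

lemma ert_mono': "(\<And>\<sigma>. g \<sigma> \<le> h \<sigma>) \<Longrightarrow> ert C g \<sigma> \<le> ert C h \<sigma>"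
  using ert_mono_pt[of C] by blast

lemma mono_Fe: "mono (Fe \<phi> C f)"
  by (rule monoI) (auto simp: Fe_def le_fun_def iver_def intro!: add_left_mono ert_mono')

lemma ert_While_unfold:
  "ert (While \<phi> C I) f \<sigma> = 1 + (if \<phi> \<sigma> then ert C (ert (While \<phi> C I) f) \<sigma> else f \<sigma>)"
  unfolding ert_While
  by (subst lfp_unfold[OF mono_Fe]) (simp add: Fe_def)

lemma lfp_Fa_unfold:
  "lfp (Fa \<phi> C f) \<sigma> = (if \<phi> \<sigma> then awp C (lfp (Fa \<phi> C f)) \<sigma> else f \<sigma>)"
  by (subst lfp_unfold[OF mono_Fa]) (simp add: Fa_def)

lemma pr_npr: "pr p \<sigma> + npr p \<sigma> = 1"
proof -
  have "0 \<le> Rep_prob (p \<sigma>)" "Rep_prob (p \<sigma>) \<le> 1" using Rep_prob[of "p \<sigma>"] by auto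
  then show ?thesis unfolding pr_def npr_def by (simp add: ennreal_plus[symmetric])
qed

lemma awp_const_pt: "\<forall>g c. (\<forall>\<sigma>. g \<sigma> \<le> c) \<longrightarrow> (\<forall>\<sigma>. awp C g \<sigma> \<le> c)"
proof (induction C)
  case (Assign x E) then show ?case by (auto simp: subst_def)
next
  case (Seq C1 C2) then show ?case by simp
next
  case (GChoice p1 C1 p2 C2)
  show ?case
  proof (intro allI impI)
    fix g :: expect and c \<sigma> assume a: "\<forall>\<sigma>. g \<sigma> \<le> c"
    have "awp C1 g \<sigma> \<le> c" "awp C2 g \<sigma> \<le> c" using GChoice a by blast+
    then show "awp (GChoice p1 C1 p2 C2) g \<sigma> \<le> c"
      by (auto simp: iver_def)
  qed
next
  case (PChoice C1 p C2)
  show ?case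
  proof (intro allI impI)
    fix g :: expect and c \<sigma> assume a: "\<forall>\<sigma>. g \<sigma> \<le> c"
    have "awp C1 g \<sigma> \<le> c" "awp C2 g \<sigma> \<le> c" using PChoice a by blast+
    then have "pr p \<sigma> * awp C1 g \<sigma> + npr p \<sigma> * awp C2 g \<sigma> \<le> pr p \<sigma> * c + npr p \<sigma> * c"
      by (intro add_mono mult_left_mono) auto
    also have "\<dots> = c" by (simp add: distrib_right[symmetric] pr_npr)
    finally show "awp (PChoice C1 p C2) g \<sigma> \<le> c" by simp
  qed
next
  case (While \<phi> C I)
  show ?case
  proof (intro allI impI)
    fix g :: expect and c \<sigma> assume a: "\<forall>\<sigma>. g \<sigma> \<le> c"
    have "lfp (Fa \<phi> C g) \<le> (\<lambda>_. c)"
      apply (rule lfp_lowerbound)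
      using a While by (auto simp: Fa_def le_fun_def iver_def)
    then show "awp (While \<phi> C I) g \<sigma> \<le> c"
      unfolding awp_While by (auto simp: le_fun_def)
  qed
qed simp

lemma awp_const: "(\<And>\<sigma>. g \<sigma> \<le> c) \<Longrightarrow> awp C g \<sigma> \<le> c"
  using awp_const_pt[of C] by blast

lemma awp_homog_pt: "\<forall>g c \<sigma>. awp C (\<lambda>\<tau>. c * g \<tau>) \<sigma> \<le> c * awp C g \<sigma>"
proof (induction C)
  case (Assign x E) then show ?case by (auto simp: subst_def)
next
  case (Seq C1 C2)
  show ?case
  proof (intro allI)
    fix g :: expect and c \<sigma>
    have "awp C1 (awp C2 (\<lambda>\<tau>. c * g \<tau>)) \<sigma> \<le> awp C1 (\<lambda>\<tau>. c * awp C2 g \<tau>) \<sigma>"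
      using Seq by (intro awp_mono') blast
    also have "\<dots> \<le> c * awp C1 (awp C2 g) \<sigma>" using Seq by blast
    finally show "awp (Seq C1 C2) (\<lambda>\<tau>. c * g \<tau>) \<sigma> \<le> c * awp (Seq C1 C2) g \<sigma>" by simp
  qed
next
  case (GChoice p1 C1 p2 C2)
  show ?case
  proof (intro allI)
    fix g :: expect and c \<sigma>
    have h: "awp C1 (\<lambda>\<tau>. c * g \<tau>) \<sigma> \<le> c * awp C1 g \<sigma>" "awp C2 (\<lambda>\<tau>. c * g \<tau>) \<sigma> \<le> c * awp C2 g \<sigma>"
      using GChoice by blast+
    have m1: "c * awp C1 g \<sigma> \<le> c * max (awp C1 g \<sigma>) (awp C2 g \<sigma>)"
      and m2: "c * awp C2 g \<sigma> \<le> c * max (awp C1 g \<sigma>) (awp C2 g \<sigma>)"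
      by (auto intro: mult_left_mono)
    show "awp (GChoice p1 C1 p2 C2) (\<lambda>\<tau>. c * g \<tau>) \<sigma> \<le> c * awp (GChoice p1 C1 p2 C2) g \<sigma>"
      using h m1 m2 by (cases "p1 \<sigma>"; cases "p2 \<sigma>") (auto intro: order_trans)
  qed
next
  case (PChoice C1 p C2)
  show ?case
  proof (intro allI)
    fix g :: expect and c \<sigma>
    have h: "awp C1 (\<lambda>\<tau>. c * g \<tau>) \<sigma> \<le> c * awp C1 g \<sigma>" "awp C2 (\<lambda>\<tau>. c * g \<tau>) \<sigma> \<le> c * awp C2 g \<sigma>"
      using PChoice by blast+
    have "pr p \<sigma> * awp C1 (\<lambda>\<tau>. c * g \<tau>) \<sigma> + npr p \<sigma> * awp C2 (\<lambda>\<tau>. c * g \<tau>) \<sigma>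
       \<le> pr p \<sigma> * (c * awp C1 g \<sigma>) + npr p \<sigma> * (c * awp C2 g \<sigma>)"
      using h by (intro add_mono mult_left_mono) auto
    also have "\<dots> = c * (pr p \<sigma> * awp C1 g \<sigma> + npr p \<sigma> * awp C2 g \<sigma>)"
      by (simp add: distrib_left mult.left_commute)
    finally show "awp (PChoice C1 p C2) (\<lambda>\<tau>. c * g \<tau>) \<sigma> \<le> c * awp (PChoice C1 p C2) g \<sigma>" by simp
  qed
next
  case (While \<phi> C I)
  show ?case
  proof (intro allI)
    fix g :: expect and c \<sigma>
    let ?L = "lfp (Fa \<phi> C g)"
    have "lfp (Fa \<phi> C (\<lambda>\<tau>. c * g \<tau>)) \<le> (\<lambda>\<sigma>. c * ?L \<sigma>)"
    proof (rule lfp_lowerbound, rule le_funI)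
      fix \<sigma>
      show "Fa \<phi> C (\<lambda>\<tau>. c * g \<tau>) (\<lambda>\<sigma>. c * ?L \<sigma>) \<sigma> \<le> c * ?L \<sigma>"
        using While lfp_Fa_unfold[of \<phi> C g \<sigma>] by (cases "\<phi> \<sigma>") (auto simp: Fa_def)
    qed
    then show "awp (While \<phi> C I) (\<lambda>\<tau>. c * g \<tau>) \<sigma> \<le> c * awp (While \<phi> C I) g \<sigma>"
      unfolding awp_While by (auto simp: le_fun_def)
  qed
qed simp

lemma awp_homog: "awp C (\<lambda>\<tau>. c * g \<tau>) \<sigma> \<le> c * awp C g \<sigma>"
  using awp_homog_pt by blast

lemma awp_superhomog:
  assumes "c < \<infinity>"
  shows "c * awp C g \<sigma> \<le> awp C (\<lambda>\<tau>. c * g \<tau>) \<sigma>"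
proof (cases "c = 0")
  case True then show ?thesis by simp
next
  case False
  have ic: "inverse c * c = 1" using ennreal_divide_self[of c] False assms
    by (simp add: divide_ennreal_def mult.commute top.not_eq_extremum)
  have "awp C g \<sigma> = awp C (\<lambda>\<tau>. inverse c * (c * g \<tau>)) \<sigma>"
    by (simp add: mult.assoc[symmetric] ic)
  also have "\<dots> \<le> inverse c * awp C (\<lambda>\<tau>. c * g \<tau>) \<sigma>" by (rule awp_homog)
  finally have "c * awp C g \<sigma> \<le> c * (inverse c * awp C (\<lambda>\<tau>. c * g \<tau>) \<sigma>)"
    by (rule mult_left_mono) simp
  also have "\<dots> = (inverse c * c) * awp C (\<lambda>\<tau>. c * g \<tau>) \<sigma>" by (simp add: mult_ac)
  also have "\<dots> = awp C (\<lambda>\<tau>. c * g \<tau>) \<sigma>" by (simp add: ic)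
  finally show ?thesis .
qed

lemma awp_subadd_pt: "\<forall>g h \<sigma>. awp C (\<lambda>\<tau>. g \<tau> + h \<tau>) \<sigma> \<le> awp C g \<sigma> + awp C h \<sigma>"
proof (induction C)
  case (Assign x E) then show ?case by (auto simp: subst_def)
next
  case (Seq C1 C2)
  show ?case
  proof (intro allI)
    fix g h :: expect and \<sigma>
    have "awp C1 (awp C2 (\<lambda>\<tau>. g \<tau> + h \<tau>)) \<sigma> \<le> awp C1 (\<lambda>\<tau>. awp C2 g \<tau> + awp C2 h \<tau>) \<sigma>"
      using Seq by (intro awp_mono') blast
    also have "\<dots> \<le> awp C1 (awp C2 g) \<sigma> + awp C1 (awp C2 h) \<sigma>" using Seq by blast
    finally show "awp (Seq C1 C2) (\<lambda>\<tau>. g \<tau> + h \<tau>) \<sigma> \<le> awp (Seq C1 C2) g \<sigma> + awp (Seq C1 C2) h \<sigma>" by simp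
  qed
next
  case (GChoice p1 C1 p2 C2)
  show ?case
  proof (intro allI)
    fix g h :: expect and \<sigma>
    have h: "awp C1 (\<lambda>\<tau>. g \<tau> + h \<tau>) \<sigma> \<le> awp C1 g \<sigma> + awp C1 h \<sigma>"
            "awp C2 (\<lambda>\<tau>. g \<tau> + h \<tau>) \<sigma> \<le> awp C2 g \<sigma> + awp C2 h \<sigma>"
      using GChoice by blast+
    have m: "awp C1 g \<sigma> + awp C1 h \<sigma> \<le> max (awp C1 g \<sigma>) (awp C2 g \<sigma>) + max (awp C1 h \<sigma>) (awp C2 h \<sigma>)"
            "awp C2 g \<sigma> + awp C2 h \<sigma> \<le> max (awp C1 g \<sigma>) (awp C2 g \<sigma>) + max (awp C1 h \<sigma>) (awp C2 h \<sigma>)"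
      by (auto intro!: add_mono)
    show "awp (GChoice p1 C1 p2 C2) (\<lambda>\<tau>. g \<tau> + h \<tau>) \<sigma> \<le> awp (GChoice p1 C1 p2 C2) g \<sigma> + awp (GChoice p1 C1 p2 C2) h \<sigma>"
      using h m by (cases "p1 \<sigma>"; cases "p2 \<sigma>") (auto intro: order_trans)
  qed
next
  case (PChoice C1 p C2)
  show ?case
  proof (intro allI)
    fix g h :: expect and \<sigma>
    have h: "awp C1 (\<lambda>\<tau>. g \<tau> + h \<tau>) \<sigma> \<le> awp C1 g \<sigma> + awp C1 h \<sigma>"
            "awp C2 (\<lambda>\<tau>. g \<tau> + h \<tau>) \<sigma> \<le> awp C2 g \<sigma> + awp C2 h \<sigma>"
      using PChoice by blast+
    have "pr p \<sigma> * awp C1 (\<lambda>\<tau>. g \<tau> + h \<tau>) \<sigma> + npr p \<sigma> * awp C2 (\<lambda>\<tau>. g \<tau> + h \<tau>) \<sigma>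
       \<le> pr p \<sigma> * (awp C1 g \<sigma> + awp C1 h \<sigma>) + npr p \<sigma> * (awp C2 g \<sigma> + awp C2 h \<sigma>)"
      using h by (intro add_mono mult_left_mono) auto
    also have "\<dots> = (pr p \<sigma> * awp C1 g \<sigma> + npr p \<sigma> * awp C2 g \<sigma>) + (pr p \<sigma> * awp C1 h \<sigma> + npr p \<sigma> * awp C2 h \<sigma>)"
      by (simp add: distrib_left add_ac)
    finally show "awp (PChoice C1 p C2) (\<lambda>\<tau>. g \<tau> + h \<tau>) \<sigma> \<le> awp (PChoice C1 p C2) g \<sigma> + awp (PChoice C1 p C2) h \<sigma>" by simp
  qed
next
  case (While \<phi> C I)
  show ?case
  proof (intro allI)
    fix g h :: expect and \<sigma>
    let ?Lg = "lfp (Fa \<phi> C g)" and ?Lh = "lfp (Fa \<phi> C h)"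
    have "lfp (Fa \<phi> C (\<lambda>\<tau>. g \<tau> + h \<tau>)) \<le> (\<lambda>\<sigma>. ?Lg \<sigma> + ?Lh \<sigma>)"
    proof (rule lfp_lowerbound, rule le_funI)
      fix \<sigma>
      show "Fa \<phi> C (\<lambda>\<tau>. g \<tau> + h \<tau>) (\<lambda>\<sigma>. ?Lg \<sigma> + ?Lh \<sigma>) \<sigma> \<le> ?Lg \<sigma> + ?Lh \<sigma>"
        using While lfp_Fa_unfold[of \<phi> C g \<sigma>] lfp_Fa_unfold[of \<phi> C h \<sigma>]
        by (cases "\<phi> \<sigma>") (auto simp: Fa_def)
    qed
    then show "awp (While \<phi> C I) (\<lambda>\<tau>. g \<tau> + h \<tau>) \<sigma> \<le> awp (While \<phi> C I) g \<sigma> + awp (While \<phi> C I) h \<sigma>"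
      unfolding awp_While by (auto simp: le_fun_def)
  qed
qed simp

lemma awp_subadd: "awp C (\<lambda>\<tau>. g \<tau> + h \<tau>) \<sigma> \<le> awp C g \<sigma> + awp C h \<sigma>"
  using awp_subadd_pt by blast

lemma awp_le_ert_pt: "\<forall>t \<sigma>. awp C t \<sigma> \<le> ert C t \<sigma>"
proof (induction C)
  case (Assign x E) then show ?case by (auto simp: subst_def add_increasing)
next
  case Skip then show ?case by (auto simp: add_increasing)
next
  case (Seq C1 C2)
  show ?case
  proof (intro allI)
    fix t :: expect and \<sigma>
    have "awp C1 (awp C2 t) \<sigma> \<le> awp C1 (ert C2 t) \<sigma>"
      using Seq by (intro awp_mono') blast
    also have "\<dots> \<le> ert C1 (ert C2 t) \<sigma>" using Seq by blast
    finally show "awp (Seq C1 C2) t \<sigma> \<le> ert (Seq C1 C2) t \<sigma>" by simp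
  qed
next
  case (GChoice p1 C1 p2 C2)
  show ?case
  proof (intro allI)
    fix t :: expect and \<sigma>
    have h: "awp C1 t \<sigma> \<le> ert C1 t \<sigma>" "awp C2 t \<sigma> \<le> ert C2 t \<sigma>" using GChoice by blast+
    have "max (iver p1 \<sigma> * awp C1 t \<sigma>) (iver p2 \<sigma> * awp C2 t \<sigma>) \<le> max (iver p1 \<sigma> * ert C1 t \<sigma>) (iver p2 \<sigma> * ert C2 t \<sigma>)"
      using h by (intro max.mono mult_left_mono) auto
    also have "\<dots> \<le> 1 + \<dots>" by (simp add: add_increasing)
    finally show "awp (GChoice p1 C1 p2 C2) t \<sigma> \<le> ert (GChoice p1 C1 p2 C2) t \<sigma>" by simp
  qed
next
  case (PChoice C1 p C2)
  show ?case
  proof (intro allI)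
    fix t :: expect and \<sigma>
    have h: "awp C1 t \<sigma> \<le> ert C1 t \<sigma>" "awp C2 t \<sigma> \<le> ert C2 t \<sigma>" using PChoice by blast+
    have "pr p \<sigma> * awp C1 t \<sigma> + npr p \<sigma> * awp C2 t \<sigma> \<le> pr p \<sigma> * ert C1 t \<sigma> + npr p \<sigma> * ert C2 t \<sigma>"
      using h by (intro add_mono mult_left_mono) auto
    also have "\<dots> \<le> 1 + \<dots>" by (simp add: add_increasing)
    finally show "awp (PChoice C1 p C2) t \<sigma> \<le> ert (PChoice C1 p C2) t \<sigma>" by simp
  qed
next
  case (While \<phi> C I)
  show ?case
  proof (intro allI)
    fix t :: expect and \<sigma>
    let ?E = "ert (While \<phi> C I) t"
    have "lfp (Fa \<phi> C t) \<le> ?E"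
    proof (rule lfp_lowerbound, rule le_funI)
      fix \<sigma>
      have "Fa \<phi> C t ?E \<sigma> \<le> (if \<phi> \<sigma> then ert C ?E \<sigma> else t \<sigma>)"
        using While by (auto simp: Fa_def)
      also have "\<dots> \<le> ?E \<sigma>" using ert_While_unfold[of \<phi> C I t \<sigma>] by (simp add: add_increasing)
      finally show "Fa \<phi> C t ?E \<sigma> \<le> ?E \<sigma>" .
    qed
    then show "awp (While \<phi> C I) t \<sigma> \<le> ert (While \<phi> C I) t \<sigma>"
      unfolding awp_While by (auto simp: le_fun_def)
  qed
qed

lemma awp_le_ert: "awp C t \<sigma> \<le> ert C t \<sigma>"
  using awp_le_ert_pt by blast

lemma lfp_Fa_mono: "(\<And>\<sigma>. g \<sigma> \<le> h \<sigma>) \<Longrightarrow> lfp (Fa \<phi> C g) \<le> lfp (Fa \<phi> C h)"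
  by (rule lfp_mono) (auto simp: Fa_def le_fun_def iver_def)

lemma awp_superadd_pt: "isdet C \<Longrightarrow> \<forall>g h \<sigma>. awp C g \<sigma> + awp C h \<sigma> \<le> awp C (\<lambda>\<tau>. g \<tau> + h \<tau>) \<sigma>"
proof (induction C)
  case (Assign x E) then show ?case by (auto simp: subst_def)
next
  case (Seq C1 C2)
  show ?case
  proof (intro allI)
    fix g h :: expect and \<sigma>
    have d1: "isdet C1" using Seq.prems by simp
    have "awp C1 (awp C2 g) \<sigma> + awp C1 (awp C2 h) \<sigma> \<le> awp C1 (\<lambda>\<tau>. awp C2 g \<tau> + awp C2 h \<tau>) \<sigma>"
      by (rule Seq.IH(1)[OF d1, rule_format])
    also have "\<dots> \<le> awp C1 (awp C2 (\<lambda>\<tau>. g \<tau> + h \<tau>)) \<sigma>"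
      using Seq by (intro awp_mono') auto
    finally show "awp (Seq C1 C2) g \<sigma> + awp (Seq C1 C2) h \<sigma> \<le> awp (Seq C1 C2) (\<lambda>\<tau>. g \<tau> + h \<tau>) \<sigma>" by simp
  qed
next
  case (GChoice p1 C1 p2 C2)
  show ?case
  proof (intro allI)
    fix g h :: expect and \<sigma>
    have h: "awp C1 g \<sigma> + awp C1 h \<sigma> \<le> awp C1 (\<lambda>\<tau>. g \<tau> + h \<tau>) \<sigma>"
            "awp C2 g \<sigma> + awp C2 h \<sigma> \<le> awp C2 (\<lambda>\<tau>. g \<tau> + h \<tau>) \<sigma>"
      using GChoice by auto
    have "\<not> (p1 \<sigma> \<and> p2 \<sigma>)" using GChoice.prems by auto
    then show "awp (GChoice p1 C1 p2 C2) g \<sigma> + awp (GChoice p1 C1 p2 C2) h \<sigma> \<le> awp (GChoice p1 C1 p2 C2) (\<lambda>\<tau>. g \<tau> + h \<tau>) \<sigma>"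
      using h by (cases "p1 \<sigma>"; cases "p2 \<sigma>") auto
  qed
next
  case (PChoice C1 p C2)
  show ?case
  proof (intro allI)
    fix g h :: expect and \<sigma>
    have h: "awp C1 g \<sigma> + awp C1 h \<sigma> \<le> awp C1 (\<lambda>\<tau>. g \<tau> + h \<tau>) \<sigma>"
            "awp C2 g \<sigma> + awp C2 h \<sigma> \<le> awp C2 (\<lambda>\<tau>. g \<tau> + h \<tau>) \<sigma>"
      using PChoice by auto
    have "(pr p \<sigma> * awp C1 g \<sigma> + npr p \<sigma> * awp C2 g \<sigma>) + (pr p \<sigma> * awp C1 h \<sigma> + npr p \<sigma> * awp C2 h \<sigma>)
       = pr p \<sigma> * (awp C1 g \<sigma> + awp C1 h \<sigma>) + npr p \<sigma> * (awp C2 g \<sigma> + awp C2 h \<sigma>)"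
      by (simp add: distrib_left add_ac)
    also have "\<dots> \<le> pr p \<sigma> * awp C1 (\<lambda>\<tau>. g \<tau> + h \<tau>) \<sigma> + npr p \<sigma> * awp C2 (\<lambda>\<tau>. g \<tau> + h \<tau>) \<sigma>"
      using h by (intro add_mono mult_left_mono) auto
    finally show "awp (PChoice C1 p C2) g \<sigma> + awp (PChoice C1 p C2) h \<sigma> \<le> awp (PChoice C1 p C2) (\<lambda>\<tau>. g \<tau> + h \<tau>) \<sigma>" by simp
  qed
next
  case (While \<phi> C I)
  have IH: "\<And>g h \<sigma>. awp C g \<sigma> + awp C h \<sigma> \<le> awp C (\<lambda>\<tau>. g \<tau> + h \<tau>) \<sigma>" using While by auto
  show ?case
  proof (intro allI)
    fix g h :: expect and \<sigma>
    let ?Lg = "lfp (Fa \<phi> C g)" and ?Lh = "lfp (Fa \<phi> C h)" and ?L = "lfp (Fa \<phi> C (\<lambda>\<tau>. g \<tau> + h \<tau>))"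
    have "\<forall>\<sigma>. ?Lg \<sigma> + ?Lh \<sigma> \<le> ?L \<sigma>"
    proof (rule lfp_ordinal_induct[where P="\<lambda>x. \<forall>\<sigma>. x \<sigma> + ?Lh \<sigma> \<le> ?L \<sigma>", OF mono_Fa])
      fix S :: expect assume 1: "\<forall>\<sigma>. S \<sigma> + ?Lh \<sigma> \<le> ?L \<sigma>"
      show "\<forall>\<sigma>. Fa \<phi> C g S \<sigma> + ?Lh \<sigma> \<le> ?L \<sigma>"
      proof
        fix \<sigma>
        show "Fa \<phi> C g S \<sigma> + ?Lh \<sigma> \<le> ?L \<sigma>"
        proof (cases "\<phi> \<sigma>")
          case True
          have "Fa \<phi> C g S \<sigma> + ?Lh \<sigma> = awp C S \<sigma> + awp C ?Lh \<sigma>"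
            using True lfp_Fa_unfold[of \<phi> C h \<sigma>] by (simp add: Fa_def)
          also have "\<dots> \<le> awp C (\<lambda>\<tau>. S \<tau> + ?Lh \<tau>) \<sigma>" by (rule IH)
          also have "\<dots> \<le> awp C ?L \<sigma>" using 1 by (intro awp_mono') auto
          also have "\<dots> = ?L \<sigma>" using True lfp_Fa_unfold[of \<phi> C "\<lambda>\<tau>. g \<tau> + h \<tau>" \<sigma>] by simp
          finally show ?thesis .
        next
          case False
          then show ?thesis using lfp_Fa_unfold[of \<phi> C h \<sigma>] lfp_Fa_unfold[of \<phi> C "\<lambda>\<tau>. g \<tau> + h \<tau>" \<sigma>]
            by (simp add: Fa_def)
        qed
      qed
    next
      fix M :: "expect set" assume 2: "\<forall>S\<in>M. \<forall>\<sigma>. S \<sigma> + ?Lh \<sigma> \<le> ?L \<sigma>"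
      show "\<forall>\<sigma>. Sup M \<sigma> + ?Lh \<sigma> \<le> ?L \<sigma>"
      proof
        fix \<sigma>
        show "Sup M \<sigma> + ?Lh \<sigma> \<le> ?L \<sigma>"
        proof (cases "M = {}")
          case True
          have "?Lh \<le> ?L" by (rule lfp_Fa_mono) (simp add: add_increasing)
          then show ?thesis using True by (simp add: le_fun_def)
        next
          case False
          have "Sup M \<sigma> + ?Lh \<sigma> = (SUP S\<in>M. S \<sigma> + ?Lh \<sigma>)"
            by (simp add: ennreal_SUP_add_left[OF False])
          also have "\<dots> \<le> ?L \<sigma>" using 2 by (auto intro!: SUP_least)
          finally show ?thesis .
        qed
      qed
    qed
    then show "awp (While \<phi> C I) g \<sigma> + awp (While \<phi> C I) h \<sigma> \<le> awp (While \<phi> C I) (\<lambda>\<tau>. g \<tau> + h \<tau>) \<sigma>"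
      unfolding awp_While by blast
  qed
qed simp

lemma awp_superadd: "isdet C \<Longrightarrow> awp C g \<sigma> + awp C h \<sigma> \<le> awp C (\<lambda>\<tau>. g \<tau> + h \<tau>) \<sigma>"
  using awp_superadd_pt by blast


lemma dwp_mono_pt: "\<forall>g h. (\<forall>\<sigma>. g \<sigma> \<le> h \<sigma>) \<longrightarrow> (\<forall>\<sigma>. dwp C g \<sigma> \<le> dwp C h \<sigma>)"
proof (induction C)
  case (Assign x E) then show ?case by (auto simp: subst_def)
next
  case (Seq C1 C2) then show ?case by simp
next
  case (GChoice p1 C1 p2 C2)
  show ?case
  proof (intro allI impI)
    fix g h :: expect and \<sigma> assume a: "\<forall>\<sigma>. g \<sigma> \<le> h \<sigma>"
    have "dwp C1 g \<sigma> \<le> dwp C1 h \<sigma>" "dwp C2 g \<sigma> \<le> dwp C2 h \<sigma>" using GChoice a by blast+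
    then have "guardto p1 (dwp C1 g) \<sigma> \<le> guardto p1 (dwp C1 h) \<sigma>" "guardto p2 (dwp C2 g) \<sigma> \<le> guardto p2 (dwp C2 h) \<sigma>"
      by (auto simp: guardto_def)
    then have "min (guardto p1 (dwp C1 g) \<sigma>) (guardto p2 (dwp C2 g) \<sigma>) \<le> min (guardto p1 (dwp C1 h) \<sigma>) (guardto p2 (dwp C2 h) \<sigma>)"
      by (rule min.mono)
    then show "dwp (GChoice p1 C1 p2 C2) g \<sigma> \<le> dwp (GChoice p1 C1 p2 C2) h \<sigma>" by simp
  qed
next
  case (PChoice C1 p C2)
  then show ?case by (auto intro!: add_mono mult_left_mono)
next
  case (While \<phi> C I)
  show ?case
  proof (intro allI impI)
    fix g h :: expect and \<sigma> assume a: "\<forall>\<sigma>. g \<sigma> \<le> h \<sigma>"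
    have "lfp (Fd \<phi> C g) \<le> lfp (Fd \<phi> C h)"
      apply (rule lfp_mono)
      using a by (auto simp: Fd_def le_fun_def iver_def)
    then show "dwp (While \<phi> C I) g \<sigma> \<le> dwp (While \<phi> C I) h \<sigma>"
      unfolding dwp_While by (auto simp: le_fun_def)
  qed
qed simp

lemma dwp_mono': "(\<And>\<sigma>. g \<sigma> \<le> h \<sigma>) \<Longrightarrow> dwp C g \<sigma> \<le> dwp C h \<sigma>"
  using dwp_mono_pt[of C] by blast

lemma rf_awp: "rf C' C \<Longrightarrow> \<forall>g \<sigma>. awp C' g \<sigma> \<le> awp C g \<sigma>"
proof (induction C' arbitrary: C)
  case Skip then show ?case by (cases C) auto
next
  case (Assign x E) then show ?case by (cases C) auto
next
  case (Seq C1 C2)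
  then obtain D1 D2 where C: "C = Seq D1 D2" "rf C1 D1" "rf C2 D2" by (cases C) auto
  show ?case
  proof (intro allI)
    fix g \<sigma>
    have "awp C1 (awp C2 g) \<sigma> \<le> awp C1 (awp D2 g) \<sigma>" using Seq C by (intro awp_mono') blast
    also have "\<dots> \<le> awp D1 (awp D2 g) \<sigma>" using Seq C by blast
    finally show "awp (Seq C1 C2) g \<sigma> \<le> awp C g \<sigma>" using C by simp
  qed
next
  case (GChoice p1 C1 p2 C2)
  then obtain q1 D1 q2 D2 where C: "C = GChoice q1 D1 q2 D2" "rf C1 D1" "rf C2 D2"
     "\<forall>\<sigma>. p1 \<sigma> \<longrightarrow> q1 \<sigma>" "\<forall>\<sigma>. p2 \<sigma> \<longrightarrow> q2 \<sigma>" by (cases C) auto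
  show ?case
  proof (intro allI)
    fix g \<sigma>
    have h: "awp C1 g \<sigma> \<le> awp D1 g \<sigma>" "awp C2 g \<sigma> \<le> awp D2 g \<sigma>" using GChoice C by blast+
    have "iver p1 \<sigma> * awp C1 g \<sigma> \<le> iver q1 \<sigma> * awp D1 g \<sigma>" "iver p2 \<sigma> * awp C2 g \<sigma> \<le> iver q2 \<sigma> * awp D2 g \<sigma>"
      using h C(4,5) by (auto simp: iver_def)
    then have "max (iver p1 \<sigma> * awp C1 g \<sigma>) (iver p2 \<sigma> * awp C2 g \<sigma>) \<le> max (iver q1 \<sigma> * awp D1 g \<sigma>) (iver q2 \<sigma> * awp D2 g \<sigma>)"
      by (rule max.mono)
    then show "awp (GChoice p1 C1 p2 C2) g \<sigma> \<le> awp C g \<sigma>" using C(1) by simp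
  qed
next
  case (PChoice C1 p C2)
  then obtain D1 D2 where C: "C = PChoice D1 p D2" "rf C1 D1" "rf C2 D2" by (cases C) auto
  show ?case
  proof (intro allI)
    fix g \<sigma>
    have h: "awp C1 g \<sigma> \<le> awp D1 g \<sigma>" "awp C2 g \<sigma> \<le> awp D2 g \<sigma>" using PChoice C by blast+
    then show "awp (PChoice C1 p C2) g \<sigma> \<le> awp C g \<sigma>" using C(1) by (auto intro!: add_mono mult_left_mono)
  qed
next
  case (While \<phi> C1 I)
  then obtain D1 where C: "C = While \<phi> D1 I" "rf C1 D1" by (cases C) auto
  show ?case
  proof (intro allI)
    fix g \<sigma>
    have "lfp (Fa \<phi> C1 g) \<le> lfp (Fa \<phi> D1 g)"
      apply (rule lfp_mono)
      using While C by (auto simp: Fa_def le_fun_def iver_def)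
    then show "awp (While \<phi> C1 I) g \<sigma> \<le> awp C g \<sigma>" unfolding C(1) awp_While by (auto simp: le_fun_def)
  qed
qed

lemma rf_ert: "rf C' C \<Longrightarrow> \<forall>g \<sigma>. ert C' g \<sigma> \<le> ert C g \<sigma>"
proof (induction C' arbitrary: C)
  case Skip then show ?case by (cases C) auto
next
  case (Assign x E) then show ?case by (cases C) auto
next
  case (Seq C1 C2)
  then obtain D1 D2 where C: "C = Seq D1 D2" "rf C1 D1" "rf C2 D2" by (cases C) auto
  show ?case
  proof (intro allI)
    fix g \<sigma>
    have "ert C1 (ert C2 g) \<sigma> \<le> ert C1 (ert D2 g) \<sigma>" using Seq C by (intro ert_mono') blast
    also have "\<dots> \<le> ert D1 (ert D2 g) \<sigma>" using Seq C by blast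
    finally show "ert (Seq C1 C2) g \<sigma> \<le> ert C g \<sigma>" using C by simp
  qed
next
  case (GChoice p1 C1 p2 C2)
  then obtain q1 D1 q2 D2 where C: "C = GChoice q1 D1 q2 D2" "rf C1 D1" "rf C2 D2"
     "\<forall>\<sigma>. p1 \<sigma> \<longrightarrow> q1 \<sigma>" "\<forall>\<sigma>. p2 \<sigma> \<longrightarrow> q2 \<sigma>" by (cases C) auto
  show ?case
  proof (intro allI)
    fix g \<sigma>
    have h: "ert C1 g \<sigma> \<le> ert D1 g \<sigma>" "ert C2 g \<sigma> \<le> ert D2 g \<sigma>" using GChoice C by blast+
    have "iver p1 \<sigma> * ert C1 g \<sigma> \<le> iver q1 \<sigma> * ert D1 g \<sigma>" "iver p2 \<sigma> * ert C2 g \<sigma> \<le> iver q2 \<sigma> * ert D2 g \<sigma>"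
      using h C(4,5) by (auto simp: iver_def)
    then have "max (iver p1 \<sigma> * ert C1 g \<sigma>) (iver p2 \<sigma> * ert C2 g \<sigma>) \<le> max (iver q1 \<sigma> * ert D1 g \<sigma>) (iver q2 \<sigma> * ert D2 g \<sigma>)"
      by (rule max.mono)
    then show "ert (GChoice p1 C1 p2 C2) g \<sigma> \<le> ert C g \<sigma>" using C(1) by (simp add: add_left_mono)
  qed
next
  case (PChoice C1 p C2)
  then obtain D1 D2 where C: "C = PChoice D1 p D2" "rf C1 D1" "rf C2 D2" by (cases C) auto
  show ?case
  proof (intro allI)
    fix g \<sigma>
    have h: "ert C1 g \<sigma> \<le> ert D1 g \<sigma>" "ert C2 g \<sigma> \<le> ert D2 g \<sigma>" using PChoice C by blast+
    then show "ert (PChoice C1 p C2) g \<sigma> \<le> ert C g \<sigma>" using C(1) by (auto intro!: add_mono mult_left_mono)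
  qed
next
  case (While \<phi> C1 I)
  then obtain D1 where C: "C = While \<phi> D1 I" "rf C1 D1" by (cases C) auto
  show ?case
  proof (intro allI)
    fix g \<sigma>
    have "lfp (Fe \<phi> C1 g) \<le> lfp (Fe \<phi> D1 g)"
      apply (rule lfp_mono)
      using While C by (auto simp: Fe_def le_fun_def iver_def intro!: add_left_mono)
    then show "ert (While \<phi> C1 I) g \<sigma> \<le> ert C g \<sigma>" unfolding C(1) ert_While by (auto simp: le_fun_def)
  qed
qed

lemma rf_dwp: "rf C' C \<Longrightarrow> \<forall>g \<sigma>. dwp C g \<sigma> \<le> dwp C' g \<sigma>"
proof (induction C' arbitrary: C)
  case Skip then show ?case by (cases C) auto
next
  case (Assign x E) then show ?case by (cases C) auto
next
  case (Seq C1 C2)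
  then obtain D1 D2 where C: "C = Seq D1 D2" "rf C1 D1" "rf C2 D2" by (cases C) auto
  have m: "\<And>g h \<sigma>. (\<And>\<sigma>. g \<sigma> \<le> h \<sigma>) \<Longrightarrow> dwp D1 g \<sigma> \<le> dwp D1 h \<sigma>" by (rule dwp_mono')
  show ?case
  proof (intro allI)
    fix g \<sigma>
    have "dwp D1 (dwp D2 g) \<sigma> \<le> dwp D1 (dwp C2 g) \<sigma>" using Seq C by (intro m) blast
    also have "\<dots> \<le> dwp C1 (dwp C2 g) \<sigma>" using Seq C by blast
    finally show "dwp C g \<sigma> \<le> dwp (Seq C1 C2) g \<sigma>" using C by simp
  qed
next
  case (GChoice p1 C1 p2 C2)
  then obtain q1 D1 q2 D2 where C: "C = GChoice q1 D1 q2 D2" "rf C1 D1" "rf C2 D2"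
     "\<forall>\<sigma>. p1 \<sigma> \<longrightarrow> q1 \<sigma>" "\<forall>\<sigma>. p2 \<sigma> \<longrightarrow> q2 \<sigma>" by (cases C) auto
  show ?case
  proof (intro allI)
    fix g \<sigma>
    have h: "dwp D1 g \<sigma> \<le> dwp C1 g \<sigma>" "dwp D2 g \<sigma> \<le> dwp C2 g \<sigma>" using GChoice C by blast+
    have "guardto q1 (dwp D1 g) \<sigma> \<le> guardto p1 (dwp C1 g) \<sigma>" "guardto q2 (dwp D2 g) \<sigma> \<le> guardto p2 (dwp C2 g) \<sigma>"
      using h C(4,5) by (auto simp: guardto_def)
    then have "min (guardto q1 (dwp D1 g) \<sigma>) (guardto q2 (dwp D2 g) \<sigma>) \<le> min (guardto p1 (dwp C1 g) \<sigma>) (guardto p2 (dwp C2 g) \<sigma>)"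
      by (rule min.mono)
    then show "dwp C g \<sigma> \<le> dwp (GChoice p1 C1 p2 C2) g \<sigma>" using C(1) by simp
  qed
next
  case (PChoice C1 p C2)
  then obtain D1 D2 where C: "C = PChoice D1 p D2" "rf C1 D1" "rf C2 D2" by (cases C) auto
  show ?case
  proof (intro allI)
    fix g \<sigma>
    have h: "dwp D1 g \<sigma> \<le> dwp C1 g \<sigma>" "dwp D2 g \<sigma> \<le> dwp C2 g \<sigma>" using PChoice C by blast+
    then show "dwp C g \<sigma> \<le> dwp (PChoice C1 p C2) g \<sigma>" using C(1) by (auto intro!: add_mono mult_left_mono)
  qed
next
  case (While \<phi> C1 I)
  then obtain D1 where C: "C = While \<phi> D1 I" "rf C1 D1" by (cases C) auto
  show ?case
  proof (intro allI)
    fix g \<sigma>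
    have "lfp (Fd \<phi> D1 g) \<le> lfp (Fd \<phi> C1 g)"
      apply (rule lfp_mono)
      using While C by (auto simp: Fd_def le_fun_def iver_def)
    then show "dwp C g \<sigma> \<le> dwp (While \<phi> C1 I) g \<sigma>" unfolding C(1) dwp_While by (auto simp: le_fun_def)
  qed
qed


lemma dwp_le_awp: "wf_prog C \<Longrightarrow> \<forall>g \<sigma>. dwp C g \<sigma> \<le> awp C g \<sigma>"
proof (induction C)
  case (Seq C1 C2)
  show ?case
  proof (intro allI)
    fix g \<sigma>
    have "dwp C1 (dwp C2 g) \<sigma> \<le> dwp C1 (awp C2 g) \<sigma>" using Seq by (intro dwp_mono') auto
    also have "\<dots> \<le> awp C1 (awp C2 g) \<sigma>" using Seq by auto
    finally show "dwp (Seq C1 C2) g \<sigma> \<le> awp (Seq C1 C2) g \<sigma>" by simp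
  qed
next
  case (GChoice p1 C1 p2 C2)
  show ?case
  proof (intro allI)
    fix g \<sigma>
    have h: "dwp C1 g \<sigma> \<le> awp C1 g \<sigma>" "dwp C2 g \<sigma> \<le> awp C2 g \<sigma>" using GChoice by auto
    have "p1 \<sigma> \<or> p2 \<sigma>" using GChoice.prems by auto
    then show "dwp (GChoice p1 C1 p2 C2) g \<sigma> \<le> awp (GChoice p1 C1 p2 C2) g \<sigma>"
      using h by (auto simp: guardto_def min_le_iff_disj le_max_iff_disj)
  qed
next
  case (PChoice C1 p C2)
  then show ?case by (auto intro!: add_mono mult_left_mono)
next
  case (While \<phi> C I)
  show ?case
  proof (intro allI)
    fix g \<sigma>
    have "lfp (Fd \<phi> C g) \<le> lfp (Fa \<phi> C g)"
      apply (rule lfp_mono)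
      using While by (auto simp: Fd_def Fa_def le_fun_def iver_def)
    then show "dwp (While \<phi> C I) g \<sigma> \<le> awp (While \<phi> C I) g \<sigma>"
      unfolding dwp_While awp_While by (auto simp: le_fun_def)
  qed
qed auto

lemma dwp_const_pt: "wf_prog C \<Longrightarrow> \<forall>g c. (\<forall>\<sigma>. g \<sigma> \<le> c) \<longrightarrow> (\<forall>\<sigma>. dwp C g \<sigma> \<le> c)"
proof (induction C)
  case (Assign x E) then show ?case by (auto simp: subst_def)
next
  case (Seq C1 C2) then show ?case by simp
next
  case (GChoice p1 C1 p2 C2)
  show ?case
  proof (intro allI impI)
    fix g :: expect and c \<sigma> assume a: "\<forall>\<sigma>. g \<sigma> \<le> c"
    have "dwp C1 g \<sigma> \<le> c" "dwp C2 g \<sigma> \<le> c" using GChoice a by auto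
    moreover have "p1 \<sigma> \<or> p2 \<sigma>" using GChoice.prems by auto
    ultimately show "dwp (GChoice p1 C1 p2 C2) g \<sigma> \<le> c"
      by (auto simp: guardto_def min_le_iff_disj)
  qed
next
  case (PChoice C1 p C2)
  show ?case
  proof (intro allI impI)
    fix g :: expect and c \<sigma> assume a: "\<forall>\<sigma>. g \<sigma> \<le> c"
    have "dwp C1 g \<sigma> \<le> c" "dwp C2 g \<sigma> \<le> c" using PChoice a by auto
    then have "pr p \<sigma> * dwp C1 g \<sigma> + npr p \<sigma> * dwp C2 g \<sigma> \<le> pr p \<sigma> * c + npr p \<sigma> * c"
      by (intro add_mono mult_left_mono) auto
    also have "\<dots> = c" by (simp add: distrib_right[symmetric] pr_npr)
    finally show "dwp (PChoice C1 p C2) g \<sigma> \<le> c" by simp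
  qed
next
  case (While \<phi> C I)
  show ?case
  proof (intro allI impI)
    fix g :: expect and c \<sigma> assume a: "\<forall>\<sigma>. g \<sigma> \<le> c"
    have "lfp (Fd \<phi> C g) \<le> (\<lambda>_. c)"
      apply (rule lfp_lowerbound)
      using a While by (auto simp: Fd_def le_fun_def iver_def)
    then show "dwp (While \<phi> C I) g \<sigma> \<le> c"
      unfolding dwp_While by (auto simp: le_fun_def)
  qed
qed simp


lemma vc_preserve:
  assumes LT: "\<And>\<phi> Cb C'' I f. wf_prog Cb \<Longrightarrow> rf C'' Cb \<Longrightarrow> awp_star C'' I = awp_star Cb I
                 \<Longrightarrow> P (While \<phi> Cb I) f \<Longrightarrow> P (While \<phi> C'' I) f"
  shows "wf_prog C \<Longrightarrow> vc P C f \<Longrightarrow> rf C' (trans_awp C f) \<Longrightarrow> vc P C' f"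
proof (induction C arbitrary: f C')
  case Skip then show ?case by (cases C') auto
next
  case (Assign x E) then show ?case by (cases C') auto
next
  case (Seq C1 C2)
  obtain D1 D2 where C': "C' = Seq D1 D2" "rf D1 (trans_awp C1 (awp_star C2 f))" "rf D2 (trans_awp C2 f)"
    using Seq.prems(3) by (cases C') auto
  have e: "awp_star D2 f = awp_star C2 f" using C'(3) by (rule awp_star_trans)
  have w: "wf_prog C1" "wf_prog C2" using Seq.prems(1) by auto
  have v: "vc P C1 (awp_star C2 f)" "vc P C2 f" using Seq.prems(2) by auto
  have "vc P D1 (awp_star C2 f)" by (rule Seq.IH(1)[OF w(1) v(1) C'(2)])
  moreover have "vc P D2 f" by (rule Seq.IH(2)[OF w(2) v(2) C'(3)])
  ultimately show ?case using C'(1) e by simp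
next
  case (GChoice p1 C1 p2 C2)
  obtain q1 D1 q2 D2 where C': "C' = GChoice q1 D1 q2 D2" "rf D1 (trans_awp C1 f)" "rf D2 (trans_awp C2 f)"
    using GChoice.prems(3) by (cases C') auto
  have w: "wf_prog C1" "wf_prog C2" using GChoice.prems(1) by auto
  have v: "vc P C1 f" "vc P C2 f" using GChoice.prems(2) by auto
  have "vc P D1 f" by (rule GChoice.IH(1)[OF w(1) v(1) C'(2)])
  moreover have "vc P D2 f" by (rule GChoice.IH(2)[OF w(2) v(2) C'(3)])
  ultimately show ?case using C'(1) by simp
next
  case (PChoice C1 p C2)
  obtain D1 D2 where C': "C' = PChoice D1 p D2" "rf D1 (trans_awp C1 f)" "rf D2 (trans_awp C2 f)"
    using PChoice.prems(3) by (cases C') auto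
  have w: "wf_prog C1" "wf_prog C2" using PChoice.prems(1) by auto
  have v: "vc P C1 f" "vc P C2 f" using PChoice.prems(2) by auto
  have "vc P D1 f" by (rule PChoice.IH(1)[OF w(1) v(1) C'(2)])
  moreover have "vc P D2 f" by (rule PChoice.IH(2)[OF w(2) v(2) C'(3)])
  ultimately show ?case using C'(1) by simp
next
  case (While \<phi> Cb I)
  obtain D where C': "C' = While \<phi> D I" "rf D (trans_awp Cb I)"
    using While.prems(3) by (cases C') auto
  have wfb: "wf_prog Cb" using While.prems(1) by simp
  have v: "P (While \<phi> Cb I) f" "vc P Cb I" using While.prems(2) by auto
  have "rf D Cb" using C'(2) trans_rf[OF wfb] by (rule rf_trans)
  moreover have "awp_star D I = awp_star Cb I" using C'(2) by (rule awp_star_trans)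
  ultimately have "P (While \<phi> D I) f" using LT[OF wfb] v(1) by blast
  moreover have "vc P D I" by (rule While.IH[OF wfb v(2) C'(2)])
  ultimately show ?case using C'(1) by simp
qed



lemma ennreal_zero_by_mult:
  fixes x K :: ennreal
  assumes h: "\<And>n::nat. of_nat n * x \<le> K" and K: "K < \<infinity>"
  shows "x = 0"
proof (rule ccontr)
  assume x0: "x \<noteq> 0"
  obtain k where k: "K = ennreal k" "0 \<le> k" using K less_top_ennreal by auto
  show False
  proof (cases "x = \<infinity>")
    case True
    then show False using h[of 1] K by simp
  next
    case False
    then obtain r where r: "x = ennreal r" "0 \<le> r" using less_top_ennreal top.not_eq_extremum by auto
    with x0 have rpos: "0 < r" by auto
    define n where "n = nat \<lceil>k / r\<rceil> + 1"
    have "k / r < real n" unfolding n_def by linarith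
    then have kn: "k < real n * r" using rpos by (simp add: divide_less_eq)
    have "of_nat n * x = ennreal (real n * r)"
      using r by (simp add: ennreal_mult ennreal_of_nat_eq_real_of_nat)
    then have "ennreal (real n * r) \<le> ennreal k" using h[of n] k by simp
    then have "real n * r \<le> k" using k by simp
    then show False using kn by simp
  qed
qed

lemma ennreal_ge1_by_bound:
  fixes a R :: ennreal
  assumes h: "\<And>n::nat. of_nat n \<le> R + of_nat n * a" and R: "R < \<infinity>"
  shows "1 \<le> a"
proof (rule ccontr)
  assume "\<not> 1 \<le> a"
  then have a1: "a < 1" by simp
  then obtain r where r: "a = ennreal r" "0 \<le> r" using less_top_ennreal
    by (metis ennreal_one_less_top order.strict_trans)
  have r1: "r < 1" using a1 r by (simp add: ennreal_less_iff)
  obtain k where k: "R = ennreal k" "0 \<le> k" using R less_top_ennreal by auto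
  define n where "n = nat \<lceil>k / (1 - r)\<rceil> + 1"
  have "k / (1 - r) < real n" unfolding n_def by linarith
  then have kn: "k < real n * (1 - r)" using r1 by (simp add: divide_less_eq)
  have "ennreal (real n) \<le> ennreal (k + real n * r)"
    using h[of n] k r by (simp add: ennreal_mult ennreal_of_nat_eq_real_of_nat ennreal_plus)
  then have "real n \<le> k + real n * r" using k r by (subst (asm) ennreal_le_iff) auto
  then show False using kn by (simp add: algebra_simps)
qed


lemma iter_le_lfp: "mono f \<Longrightarrow> (f ^^ n) bot \<le> lfp f"
proof (induction n)
  case 0 then show ?case by simp
next
  case (Suc n)
  have "(f ^^ Suc n) bot = f ((f ^^ n) bot)" by simp
  also have "\<dots> \<le> f (lfp f)" using Suc by (auto dest: monoD)
  also have "\<dots> = lfp f" using lfp_unfold[OF Suc.prems] by simp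
  finally show ?case .
qed

lemma awp_sum_subadd: "finite S \<Longrightarrow> awp C (\<lambda>\<tau>. \<Sum>j\<in>S. g j \<tau>) \<sigma> \<le> (\<Sum>j\<in>S. awp C (g j) \<sigma>)"
proof (induction S rule: finite_induct)
  case empty then show ?case using awp_const[of "\<lambda>_. 0" 0 C \<sigma>] by simp
next
  case (insert x F)
  have "awp C (\<lambda>\<tau>. \<Sum>j\<in>insert x F. g j \<tau>) \<sigma> = awp C (\<lambda>\<tau>. g x \<tau> + (\<Sum>j\<in>F. g j \<tau>)) \<sigma>"
    using insert by simp
  also have "\<dots> \<le> awp C (g x) \<sigma> + awp C (\<lambda>\<tau>. \<Sum>j\<in>F. g j \<tau>) \<sigma>" by (rule awp_subadd)
  also have "\<dots> \<le> awp C (g x) \<sigma> + (\<Sum>j\<in>F. awp C (g j) \<sigma>)" using insert by (intro add_left_mono) auto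
  finally show ?case using insert by simp
qed

lemma term_lemma: "wf_prog C \<Longrightarrow> \<forall>\<sigma>. ert C (\<lambda>_. 0) \<sigma> < \<infinity> \<longrightarrow> 1 \<le> awp C (\<lambda>_. 1) \<sigma>"
proof (induction C)
  case Skip then show ?case by simp
next
  case (Assign x E) then show ?case by (simp add: subst_def)
next
  case (Seq C1 C2)
  have IH1: "\<And>\<sigma>. ert C1 (\<lambda>_. 0) \<sigma> < \<infinity> \<Longrightarrow> 1 \<le> awp C1 (\<lambda>_. 1) \<sigma>" using Seq by auto
  have IH2: "\<And>\<sigma>. ert C2 (\<lambda>_. 0) \<sigma> < \<infinity> \<Longrightarrow> 1 \<le> awp C2 (\<lambda>_. 1) \<sigma>" using Seq by auto
  show ?case
  proof (intro allI impI)
    fix \<sigma> assume fin: "ert (Seq C1 C2) (\<lambda>_. 0) \<sigma> < \<infinity>"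
    define h :: expect where "h = (\<lambda>\<tau>. if ert C2 (\<lambda>_. 0) \<tau> = \<infinity> then 1 else 0)"
    have one: "1 \<le> awp C2 (\<lambda>_. 1) \<tau> + h \<tau>" for \<tau>
      using IH2[of \<tau>] by (cases "ert C2 (\<lambda>_. 0) \<tau> = \<infinity>") (auto simp: h_def top.not_eq_extremum add_increasing2)
    have "ert C1 (\<lambda>_. 0) \<sigma> \<le> ert C1 (ert C2 (\<lambda>_. 0)) \<sigma>" by (rule ert_mono') simp
    then have "1 \<le> awp C1 (\<lambda>_. 1) \<sigma>" using fin by (intro IH1) simp
    have z: "awp C1 h \<sigma> = 0"
    proof (rule ennreal_zero_by_mult)
      fix n :: nat
      have "of_nat n * awp C1 h \<sigma> \<le> awp C1 (\<lambda>\<tau>. of_nat n * h \<tau>) \<sigma>"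
        by (rule awp_superhomog) (simp add: of_nat_less_top)
      also have "\<dots> \<le> awp C1 (ert C2 (\<lambda>_. 0)) \<sigma>" by (rule awp_mono') (simp add: h_def)
      also have "\<dots> \<le> ert C1 (ert C2 (\<lambda>_. 0)) \<sigma>" by (rule awp_le_ert)
      finally show "of_nat n * awp C1 h \<sigma> \<le> ert C1 (ert C2 (\<lambda>_. 0)) \<sigma>" .
    next
      show "ert C1 (ert C2 (\<lambda>_. 0)) \<sigma> < \<infinity>" using fin by simp
    qed
    have "1 \<le> awp C1 (\<lambda>_. 1) \<sigma>" by fact
    also have "\<dots> \<le> awp C1 (\<lambda>\<tau>. awp C2 (\<lambda>_. 1) \<tau> + h \<tau>) \<sigma>" by (rule awp_mono') (rule one)
    also have "\<dots> \<le> awp C1 (awp C2 (\<lambda>_. 1)) \<sigma> + awp C1 h \<sigma>" by (rule awp_subadd)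
    finally show "1 \<le> awp (Seq C1 C2) (\<lambda>_. 1) \<sigma>" using z by simp
  qed
next
  case (GChoice p1 C1 p2 C2)
  have IH1: "\<And>\<sigma>. ert C1 (\<lambda>_. 0) \<sigma> < \<infinity> \<Longrightarrow> 1 \<le> awp C1 (\<lambda>_. 1) \<sigma>" using GChoice by auto
  have IH2: "\<And>\<sigma>. ert C2 (\<lambda>_. 0) \<sigma> < \<infinity> \<Longrightarrow> 1 \<le> awp C2 (\<lambda>_. 1) \<sigma>" using GChoice by auto
  show ?case
  proof (intro allI impI)
    fix \<sigma> assume fin: "ert (GChoice p1 C1 p2 C2) (\<lambda>_. 0) \<sigma> < \<infinity>"
    have "p1 \<sigma> \<or> p2 \<sigma>" using GChoice.prems by auto
    then show "1 \<le> awp (GChoice p1 C1 p2 C2) (\<lambda>_. 1) \<sigma>"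
    proof
      assume p: "p1 \<sigma>"
      have "ert C1 (\<lambda>_. 0) \<sigma> < \<infinity>" using fin p
        by (auto simp: top.not_eq_extremum max_def split: if_splits)
      then show ?thesis using IH1 p by (auto simp: le_max_iff_disj)
    next
      assume p: "p2 \<sigma>"
      have "ert C2 (\<lambda>_. 0) \<sigma> < \<infinity>" using fin p
        by (auto simp: top.not_eq_extremum max_def split: if_splits)
      then show ?thesis using IH2 p by (auto simp: le_max_iff_disj)
    qed
  qed
next
  case (PChoice C1 p C2)
  have IH1: "\<And>\<sigma>. ert C1 (\<lambda>_. 0) \<sigma> < \<infinity> \<Longrightarrow> 1 \<le> awp C1 (\<lambda>_. 1) \<sigma>" using PChoice by auto
  have IH2: "\<And>\<sigma>. ert C2 (\<lambda>_. 0) \<sigma> < \<infinity> \<Longrightarrow> 1 \<le> awp C2 (\<lambda>_. 1) \<sigma>" using PChoice by auto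
  show ?case
  proof (intro allI impI)
    fix \<sigma> assume fin: "ert (PChoice C1 p C2) (\<lambda>_. 0) \<sigma> < \<infinity>"
    have f1: "pr p \<sigma> * ert C1 (\<lambda>_. 0) \<sigma> < \<infinity>" and f2: "npr p \<sigma> * ert C2 (\<lambda>_. 0) \<sigma> < \<infinity>"
      using fin by (auto simp: top.not_eq_extremum)
    have a1: "pr p \<sigma> * 1 \<le> pr p \<sigma> * awp C1 (\<lambda>_. 1) \<sigma>"
    proof (cases "pr p \<sigma> = 0")
      case False
      then have "ert C1 (\<lambda>_. 0) \<sigma> < \<infinity>" using f1 ennreal_mult_eq_top_iff[of "pr p \<sigma>" "ert C1 (\<lambda>_. 0) \<sigma>"] by (auto simp: less_top)
      then show ?thesis using IH1 by (intro mult_left_mono) auto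
    qed simp
    have a2: "npr p \<sigma> * 1 \<le> npr p \<sigma> * awp C2 (\<lambda>_. 1) \<sigma>"
    proof (cases "npr p \<sigma> = 0")
      case False
      then have "ert C2 (\<lambda>_. 0) \<sigma> < \<infinity>" using f2 ennreal_mult_eq_top_iff[of "npr p \<sigma>" "ert C2 (\<lambda>_. 0) \<sigma>"] by (auto simp: less_top)
      then show ?thesis using IH2 by (intro mult_left_mono) auto
    qed simp
    have "1 = pr p \<sigma> * 1 + npr p \<sigma> * 1" using pr_npr by simp
    also have "\<dots> \<le> pr p \<sigma> * awp C1 (\<lambda>_. 1) \<sigma> + npr p \<sigma> * awp C2 (\<lambda>_. 1) \<sigma>" using a1 a2 by (rule add_mono)
    finally show "1 \<le> awp (PChoice C1 p C2) (\<lambda>_. 1) \<sigma>" by simp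
  qed
next
  case (While \<phi> Cb I)
  have IH: "\<And>\<sigma>. ert Cb (\<lambda>_. 0) \<sigma> < \<infinity> \<Longrightarrow> 1 \<le> awp Cb (\<lambda>_. 1) \<sigma>" using While by auto
  let ?FR = "Fe \<phi> Cb (\<lambda>_. 0)" and ?FA = "Fa \<phi> Cb (\<lambda>_. 1)"
  define Rn where "Rn n = (?FR ^^ n) bot" for n
  define An where "An n = (?FA ^^ n) bot" for n
  have claim: "\<forall>\<sigma>. of_nat n \<le> Rn n \<sigma> + (\<Sum>j<n. An j \<sigma>)" for n
  proof (induction n)
    case 0 then show ?case by simp
  next
    case (Suc n)
    show ?case
    proof
      fix \<sigma>
      have RS: "Rn (Suc n) \<sigma> = 1 + (if \<phi> \<sigma> then ert Cb (Rn n) \<sigma> else 0)"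
        by (simp add: Rn_def Fe_def)
      have AS: "An (Suc j) \<sigma> = (if \<phi> \<sigma> then awp Cb (An j) \<sigma> else 1)" for j
        by (simp add: An_def Fa_def)
      have A0: "An 0 \<sigma> = 0" by (simp add: An_def bot_ennreal)
      have sumS: "(\<Sum>j<Suc n. An j \<sigma>) = (\<Sum>j<n. An (Suc j) \<sigma>)"
        by (simp only: sum.lessThan_Suc_shift A0) simp
      show "of_nat (Suc n) \<le> Rn (Suc n) \<sigma> + (\<Sum>j<Suc n. An j \<sigma>)"
      proof (cases "\<phi> \<sigma>")
        case False
        have "(\<Sum>j<n. An (Suc j) \<sigma>) = (\<Sum>j<n. 1)" using False by (intro sum.cong) (auto simp: AS)
        then have "(\<Sum>j<Suc n. An j \<sigma>) = of_nat n" by (simp only: sumS) simp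
        moreover have "Rn (Suc n) \<sigma> = 1" using False by (simp only: RS) simp
        ultimately show ?thesis by (simp add: add.commute)
      next
        case True
        have key: "of_nat n \<le> ert Cb (Rn n) \<sigma> + (\<Sum>j<n. awp Cb (An j) \<sigma>)"
        proof (cases "ert Cb (\<lambda>_. 0) \<sigma> < \<infinity>")
          case False
          have "ert Cb (\<lambda>_. 0) \<sigma> \<le> ert Cb (Rn n) \<sigma>" by (rule ert_mono') simp
          moreover have "ert Cb (\<lambda>_. 0) \<sigma> = \<infinity>" using False by (metis top.not_eq_extremum infinity_ennreal_def)
          ultimately have "ert Cb (Rn n) \<sigma> = \<infinity>" by (simp add: top_unique)
          then show ?thesis by simp
        next
          case True
          have "of_nat n \<le> of_nat n * awp Cb (\<lambda>_. 1) \<sigma>"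
            using IH[OF True] by (metis mult.right_neutral mult_left_mono zero_le)
          also have "\<dots> \<le> awp Cb (\<lambda>\<tau>. of_nat n * 1) \<sigma>"
            by (rule awp_superhomog) (simp add: of_nat_less_top)
          also have "\<dots> \<le> awp Cb (\<lambda>\<tau>. Rn n \<tau> + (\<Sum>j<n. An j \<tau>)) \<sigma>"
            using Suc.IH by (intro awp_mono') simp
          also have "\<dots> \<le> awp Cb (Rn n) \<sigma> + awp Cb (\<lambda>\<tau>. \<Sum>j<n. An j \<tau>) \<sigma>" by (rule awp_subadd)
          also have "\<dots> \<le> ert Cb (Rn n) \<sigma> + (\<Sum>j<n. awp Cb (An j) \<sigma>)"
            by (intro add_mono awp_le_ert awp_sum_subadd) simp
          finally show ?thesis .
        qed
        have "of_nat (Suc n) = 1 + of_nat n" by simp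
        also have "\<dots> \<le> 1 + (ert Cb (Rn n) \<sigma> + (\<Sum>j<n. awp Cb (An j) \<sigma>))" using key by (rule add_left_mono)
        also have "\<dots> = Rn (Suc n) \<sigma> + (\<Sum>j<Suc n. An j \<sigma>)"
        proof -
          have "(\<Sum>j<n. An (Suc j) \<sigma>) = (\<Sum>j<n. awp Cb (An j) \<sigma>)" using True by (intro sum.cong) (auto simp: AS)
          then have "(\<Sum>j<Suc n. An j \<sigma>) = (\<Sum>j<n. awp Cb (An j) \<sigma>)" by (simp only: sumS)
          moreover have "Rn (Suc n) \<sigma> = 1 + ert Cb (Rn n) \<sigma>" using True by (simp only: RS) simp
          ultimately show ?thesis by (simp add: add.assoc)
        qed
        finally show ?thesis .
      qed
    qed
  qed
  show ?case
  proof (intro allI impI)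
    fix \<sigma> assume fin: "ert (While \<phi> Cb I) (\<lambda>_. 0) \<sigma> < \<infinity>"
    let ?R = "lfp ?FR" and ?A = "lfp ?FA"
    have "of_nat n \<le> ?R \<sigma> + of_nat n * ?A \<sigma>" for n
    proof -
      have "Rn n \<le> ?R" unfolding Rn_def by (rule iter_le_lfp[OF mono_Fe])
      moreover have "An j \<le> ?A" for j unfolding An_def by (rule iter_le_lfp[OF mono_Fa])
      ultimately have "Rn n \<sigma> + (\<Sum>j<n. An j \<sigma>) \<le> ?R \<sigma> + (\<Sum>j<n. ?A \<sigma>)"
        by (intro add_mono sum_mono) (auto simp: le_fun_def)
      moreover have "(\<Sum>j<n. ?A \<sigma>) = of_nat n * ?A \<sigma>" by simp
      moreover have "of_nat n \<le> Rn n \<sigma> + (\<Sum>j<n. An j \<sigma>)" using claim[of n] by blast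
      ultimately show ?thesis by (rule_tac order_trans) auto
    qed
    moreover have "?R \<sigma> < \<infinity>" using fin by (simp add: ert_While)
    ultimately have "1 \<le> ?A \<sigma>" by (rule ennreal_ge1_by_bound)
    then show "1 \<le> awp (While \<phi> Cb I) (\<lambda>_. 1) \<sigma>" by (simp add: awp_While)
  qed
qed


lemma absdiff_fin: "a < \<infinity> \<Longrightarrow> b < \<infinity> \<Longrightarrow> absdiff a b < \<infinity>"
  unfolding absdiff_def by (simp add: top.not_eq_extremum[symmetric])

lemma le_absdiff: "(a::ennreal) \<le> b + absdiff a b"
proof (cases "a \<le> b")
  case True then show ?thesis by (simp add: add_increasing2)
next
  case False
  then have "a = b + (a - b)" by (simp add: add_diff_inverse_ennreal)
  also have "\<dots> \<le> b + absdiff a b" unfolding absdiff_def by (intro add_left_mono) simp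
  finally show ?thesis .
qed

lemma loop_dast:
  assumes det: "isdet Cb" and wf: "wf_prog Cb"
  and sub: "\<forall>\<sigma>. iver \<phi> \<sigma> * awp_star Cb I \<sigma> + iver (\<lambda>\<tau>. \<not> \<phi> \<tau>) \<sigma> * f \<sigma> \<ge> I \<sigma>"
  and ih: "\<forall>\<sigma>. awp_star Cb I \<sigma> \<le> awp Cb I \<sigma>"
  and trm: "\<forall>\<sigma>. 1 \<le> awp (While \<phi> Cb I) (\<lambda>_. 1) \<sigma>"
  and b0: "0 \<le> b" and bnd: "\<forall>\<sigma>. I \<sigma> \<le> ennreal b"
  shows "I \<sigma> \<le> awp (While \<phi> Cb I) f \<sigma>"
proof -
  let ?L = "lfp (Fa \<phi> Cb f)" and ?A = "lfp (Fa \<phi> Cb (\<lambda>_. 1))"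
  let ?b = "ennreal b"
  have I1: "I \<sigma> \<le> awp Cb I \<sigma>" if "\<phi> \<sigma>" for \<sigma>
  proof -
    have "I \<sigma> \<le> awp_star Cb I \<sigma>" using sub[rule_format, of \<sigma>] that by simp
    then show ?thesis using ih order_trans by blast
  qed
  have I2: "I \<sigma> \<le> f \<sigma>" if "\<not> \<phi> \<sigma>" for \<sigma> using sub[rule_format, of \<sigma>] that by simp
  have main: "\<forall>\<sigma>. I \<sigma> + ?b * ?A \<sigma> \<le> ?L \<sigma> + ?b"
  proof (rule lfp_ordinal_induct[where P="\<lambda>k. \<forall>\<sigma>. I \<sigma> + ?b * k \<sigma> \<le> ?L \<sigma> + ?b", OF mono_Fa])
    fix S :: expect assume IH: "\<forall>\<sigma>. I \<sigma> + ?b * S \<sigma> \<le> ?L \<sigma> + ?b"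
    show "\<forall>\<sigma>. I \<sigma> + ?b * Fa \<phi> Cb (\<lambda>_. 1) S \<sigma> \<le> ?L \<sigma> + ?b"
    proof
      fix \<sigma>
      show "I \<sigma> + ?b * Fa \<phi> Cb (\<lambda>_. 1) S \<sigma> \<le> ?L \<sigma> + ?b"
      proof (cases "\<phi> \<sigma>")
        case False
        then show ?thesis using I2[OF False] lfp_Fa_unfold[of \<phi> Cb f \<sigma>] by (simp add: Fa_def)
      next
        case True
        have "I \<sigma> + ?b * Fa \<phi> Cb (\<lambda>_. 1) S \<sigma> = I \<sigma> + ?b * awp Cb S \<sigma>" using True by (simp add: Fa_def)
        also have "\<dots> \<le> awp Cb I \<sigma> + awp Cb (\<lambda>\<tau>. ?b * S \<tau>) \<sigma>"
          by (intro add_mono I1[OF True] awp_superhomog) simp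
        also have "\<dots> \<le> awp Cb (\<lambda>\<tau>. I \<tau> + ?b * S \<tau>) \<sigma>" by (rule awp_superadd[OF det])
        also have "\<dots> \<le> awp Cb (\<lambda>\<tau>. ?L \<tau> + ?b) \<sigma>" using IH by (intro awp_mono') blast
        also have "\<dots> \<le> awp Cb ?L \<sigma> + awp Cb (\<lambda>_. ?b) \<sigma>" by (rule awp_subadd)
        also have "\<dots> \<le> ?L \<sigma> + ?b"
          using True lfp_Fa_unfold[of \<phi> Cb f \<sigma>] awp_const[of "\<lambda>_. ?b" ?b Cb \<sigma>] by simp
        finally show ?thesis .
      qed
    qed
  next
    fix M :: "expect set" assume IH: "\<forall>S\<in>M. \<forall>\<sigma>. I \<sigma> + ?b * S \<sigma> \<le> ?L \<sigma> + ?b"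
    show "\<forall>\<sigma>. I \<sigma> + ?b * Sup M \<sigma> \<le> ?L \<sigma> + ?b"
    proof
      fix \<sigma>
      show "I \<sigma> + ?b * Sup M \<sigma> \<le> ?L \<sigma> + ?b"
      proof (cases "M = {}")
        case True
        then show ?thesis using bnd[rule_format, of \<sigma>] by (simp add: bot_ennreal add_increasing)
      next
        case False
        have "I \<sigma> + ?b * Sup M \<sigma> = (SUP S\<in>M. I \<sigma> + ?b * S \<sigma>)"
          by (simp add: SUP_mult_left_ennreal ennreal_SUP_add_right[OF False] image_image)
        also have "\<dots> \<le> ?L \<sigma> + ?b" using IH by (auto intro!: SUP_least)
        finally show ?thesis .
      qed
    qed
  qed
  have "I \<sigma> + ?b = I \<sigma> + ?b * 1" by simp
  also have "\<dots> \<le> I \<sigma> + ?b * ?A \<sigma>" using trm by (intro add_left_mono mult_left_mono) (auto simp: awp_While)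
  also have "\<dots> \<le> ?L \<sigma> + ?b" using main by blast
  finally have "?b + I \<sigma> \<le> ?b + ?L \<sigma>" by (simp add: add.commute)
  then have "I \<sigma> \<le> ?L \<sigma>" by (simp add: ennreal_add_left_cancel_le)
  then show ?thesis by (simp add: awp_While)
qed


definition Th :: "pred \<Rightarrow> prog \<Rightarrow> expect \<Rightarrow> (ennreal \<Rightarrow> state \<Rightarrow> ennreal) \<Rightarrow> ennreal \<Rightarrow> state \<Rightarrow> ennreal" where
  "Th \<phi> Cb I h = (\<lambda>c \<sigma>. if \<phi> \<sigma> then awp Cb (\<lambda>\<tau>. h (c + absdiff (I \<tau>) (I \<sigma>)) \<tau>) \<sigma> else c)"

lemma mono_Th: "mono (Th \<phi> Cb I)"
  by (rule monoI) (auto simp: Th_def le_fun_def intro!: awp_mono')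

lemma lfp_Th_unfold: "lfp (Th \<phi> Cb I) c \<sigma> =
   (if \<phi> \<sigma> then awp Cb (\<lambda>\<tau>. lfp (Th \<phi> Cb I) (c + absdiff (I \<tau>) (I \<sigma>)) \<tau>) \<sigma> else c)"
  by (subst lfp_unfold[OF mono_Th]) (simp add: Th_def)

lemma loop_dpast:
  assumes det: "isdet Cb" and wf: "wf_prog Cb"
  and sub: "\<forall>\<sigma>. iver \<phi> \<sigma> * awp_star Cb I \<sigma> + iver (\<lambda>\<tau>. \<not> \<phi> \<tau>) \<sigma> * f \<sigma> \<ge> I \<sigma>"
  and ih: "\<forall>\<sigma>. awp_star Cb I \<sigma> \<le> awp Cb I \<sigma>"
  and Ishape: "\<forall>\<sigma>. \<not> \<phi> \<sigma> \<longrightarrow> I \<sigma> = f \<sigma>"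
  and Ifin: "\<forall>\<sigma>. I \<sigma> < \<infinity>"
  and b0: "0 \<le> b" and bnd: "\<forall>\<sigma>. iver \<phi> \<sigma> * awp Cb (\<lambda>\<tau>. absdiff (I \<tau>) (I \<sigma>)) \<sigma> \<le> ennreal b"
  and rt: "\<forall>\<sigma>. ert (While \<phi> Cb I) (\<lambda>_. 0) \<sigma> < \<infinity>"
  shows "I \<sigma> \<le> awp (While \<phi> Cb I) f \<sigma>"
proof -
  let ?L = "lfp (Fa \<phi> Cb f)" and ?A = "lfp (Fa \<phi> Cb (\<lambda>_. 1))"
  let ?b = "ennreal b"
  let ?R = "ert (While \<phi> Cb I) (\<lambda>_. 0)"
  let ?Z = "lfp (Th \<phi> Cb I)"
  let ?d = "\<lambda>\<sigma> \<tau>. absdiff (I \<tau>) (I \<sigma>)"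
  have I1: "I \<sigma> \<le> awp Cb I \<sigma>" if "\<phi> \<sigma>" for \<sigma>
  proof -
    have "I \<sigma> \<le> awp_star Cb I \<sigma>" using sub[rule_format, of \<sigma>] that by simp
    then show ?thesis using ih order_trans by blast
  qed
  have dfin: "?d \<sigma> \<tau> < \<infinity>" for \<sigma> \<tau> using Ifin by (intro absdiff_fin) auto
  have A1: "1 \<le> ?A \<sigma>" for \<sigma>
    using term_lemma[of "While \<phi> Cb I"] wf rt by (simp add: awp_While)
  have Zub: "?Z \<le> (\<lambda>c \<sigma>. c + ?b * ?R \<sigma>)"
  proof (rule lfp_lowerbound, intro le_funI)
    fix c \<sigma>
    show "Th \<phi> Cb I (\<lambda>c \<sigma>. c + ?b * ?R \<sigma>) c \<sigma> \<le> c + ?b * ?R \<sigma>"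
    proof (cases "\<phi> \<sigma>")
      case False then show ?thesis by (simp add: Th_def)
    next
      case True
      have "Th \<phi> Cb I (\<lambda>c \<sigma>. c + ?b * ?R \<sigma>) c \<sigma> = awp Cb (\<lambda>\<tau>. (c + ?d \<sigma> \<tau>) + ?b * ?R \<tau>) \<sigma>"
        using True by (simp add: Th_def)
      also have "\<dots> \<le> awp Cb (\<lambda>\<tau>. c + ?d \<sigma> \<tau>) \<sigma> + awp Cb (\<lambda>\<tau>. ?b * ?R \<tau>) \<sigma>" by (rule awp_subadd)
      also have "\<dots> \<le> (awp Cb (\<lambda>_. c) \<sigma> + awp Cb (?d \<sigma>) \<sigma>) + ?b * awp Cb ?R \<sigma>"
        by (intro add_mono awp_subadd awp_homog)
      also have "\<dots> \<le> (c + ?b) + ?b * ert Cb ?R \<sigma>"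
      proof -
        have h1: "awp Cb (\<lambda>_. c) \<sigma> \<le> c" by (rule awp_const) simp
        have h2: "awp Cb (?d \<sigma>) \<sigma> \<le> ?b" using bnd[rule_format, of \<sigma>] True by simp
        have h3: "?b * awp Cb ?R \<sigma> \<le> ?b * ert Cb ?R \<sigma>" by (intro mult_left_mono awp_le_ert) simp
        show ?thesis using h1 h2 h3 by (intro add_mono) auto
      qed
      also have "\<dots> = c + ?b * (1 + ert Cb ?R \<sigma>)" by (simp add: distrib_left add.assoc)
      also have "\<dots> = c + ?b * ?R \<sigma>" using ert_While_unfold[of \<phi> Cb I "\<lambda>_. 0" \<sigma>] True by simp
      finally show ?thesis .
    qed
  qed
  have Zfin: "?Z c \<sigma> < \<infinity>" if "c < \<infinity>" for c \<sigma>
  proof -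
    have "?Z c \<sigma> \<le> c + ?b * ?R \<sigma>" using Zub by (simp add: le_fun_def)
    also have "\<dots> < \<infinity>" using that rt[rule_format, of \<sigma>] ennreal_mult_eq_top_iff[of ?b "?R \<sigma>"]
      by (simp add: top.not_eq_extremum[symmetric])
    finally show ?thesis .
  qed
  have ZA: "\<forall>c \<sigma>. c < \<infinity> \<longrightarrow> c * ?A \<sigma> \<le> ?Z c \<sigma>"
  proof (rule lfp_ordinal_induct[where P="\<lambda>k. \<forall>c \<sigma>. c < \<infinity> \<longrightarrow> c * k \<sigma> \<le> ?Z c \<sigma>", OF mono_Fa])
    fix S :: expect assume IH: "\<forall>c \<sigma>. c < \<infinity> \<longrightarrow> c * S \<sigma> \<le> ?Z c \<sigma>"
    show "\<forall>c \<sigma>. c < \<infinity> \<longrightarrow> c * Fa \<phi> Cb (\<lambda>_. 1) S \<sigma> \<le> ?Z c \<sigma>"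
    proof (intro allI impI)
      fix c :: ennreal and \<sigma> assume c: "c < \<infinity>"
      show "c * Fa \<phi> Cb (\<lambda>_. 1) S \<sigma> \<le> ?Z c \<sigma>"
      proof (cases "\<phi> \<sigma>")
        case False then show ?thesis using lfp_Th_unfold[of \<phi> Cb I c \<sigma>] by (simp add: Fa_def)
      next
        case True
        have "c * Fa \<phi> Cb (\<lambda>_. 1) S \<sigma> = c * awp Cb S \<sigma>" using True by (simp add: Fa_def)
        also have "\<dots> \<le> awp Cb (\<lambda>\<tau>. c * S \<tau>) \<sigma>" by (rule awp_superhomog[OF c])
        also have "\<dots> \<le> awp Cb (\<lambda>\<tau>. ?Z (c + ?d \<sigma> \<tau>) \<tau>) \<sigma>"
        proof (rule awp_mono')
          fix \<tau>
          have "c * S \<tau> \<le> (c + ?d \<sigma> \<tau>) * S \<tau>" by (intro mult_right_mono) (auto simp: add_increasing2)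
          also have "\<dots> \<le> ?Z (c + ?d \<sigma> \<tau>) \<tau>" using IH c dfin by (simp add: top.not_eq_extremum[symmetric])
          finally show "c * S \<tau> \<le> ?Z (c + ?d \<sigma> \<tau>) \<tau>" .
        qed
        also have "\<dots> = ?Z c \<sigma>" using lfp_Th_unfold[of \<phi> Cb I c \<sigma>] True by simp
        finally show ?thesis .
      qed
    qed
  next
    fix M :: "expect set" assume IH: "\<forall>S\<in>M. \<forall>c \<sigma>. c < \<infinity> \<longrightarrow> c * S \<sigma> \<le> ?Z c \<sigma>"
    show "\<forall>c \<sigma>. c < \<infinity> \<longrightarrow> c * Sup M \<sigma> \<le> ?Z c \<sigma>"
    proof (intro allI impI)
      fix c :: ennreal and \<sigma> assume c: "c < \<infinity>"
      have "c * Sup M \<sigma> = (SUP S\<in>M. c * S \<sigma>)" by (simp add: SUP_mult_left_ennreal image_image)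
      also have "\<dots> \<le> ?Z c \<sigma>" using IH c by (auto intro!: SUP_least)
      finally show "c * Sup M \<sigma> \<le> ?Z c \<sigma>" .
    qed
  qed
  have Zc: "c \<le> ?Z c \<sigma>" if "c < \<infinity>" for c \<sigma>
  proof -
    have "c = c * 1" by simp
    also have "\<dots> \<le> c * ?A \<sigma>" using A1 by (intro mult_left_mono) auto
    also have "\<dots> \<le> ?Z c \<sigma>" using ZA that by blast
    finally show ?thesis .
  qed
  \<comment> \<open>optional stopping\<close>
  have OST: "\<forall>c \<sigma>. c < \<infinity> \<longrightarrow> I \<sigma> \<le> c \<longrightarrow> I \<sigma> + ?Z c \<sigma> \<le> ?L \<sigma> + ?Z c \<sigma>"
  proof (rule lfp_ordinal_induct[where P="\<lambda>Y. \<forall>c \<sigma>. c < \<infinity> \<longrightarrow> I \<sigma> \<le> c \<longrightarrow> I \<sigma> + Y c \<sigma> \<le> ?L \<sigma> + ?Z c \<sigma>", OF mono_Th])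
    fix S :: "ennreal \<Rightarrow> state \<Rightarrow> ennreal"
    assume IH: "\<forall>c \<sigma>. c < \<infinity> \<longrightarrow> I \<sigma> \<le> c \<longrightarrow> I \<sigma> + S c \<sigma> \<le> ?L \<sigma> + ?Z c \<sigma>"
    show "\<forall>c \<sigma>. c < \<infinity> \<longrightarrow> I \<sigma> \<le> c \<longrightarrow> I \<sigma> + Th \<phi> Cb I S c \<sigma> \<le> ?L \<sigma> + ?Z c \<sigma>"
    proof (intro allI impI)
      fix c :: ennreal and \<sigma> assume c: "c < \<infinity>" and Ic: "I \<sigma> \<le> c"
      show "I \<sigma> + Th \<phi> Cb I S c \<sigma> \<le> ?L \<sigma> + ?Z c \<sigma>"
      proof (cases "\<phi> \<sigma>")
        case False
        then show ?thesis using lfp_Th_unfold[of \<phi> Cb I c \<sigma>] lfp_Fa_unfold[of \<phi> Cb f \<sigma>] Ishape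
          by (simp add: Th_def)
      next
        case True
        have "I \<sigma> + Th \<phi> Cb I S c \<sigma> = I \<sigma> + awp Cb (\<lambda>\<tau>. S (c + ?d \<sigma> \<tau>) \<tau>) \<sigma>"
          using True by (simp add: Th_def)
        also have "\<dots> \<le> awp Cb I \<sigma> + awp Cb (\<lambda>\<tau>. S (c + ?d \<sigma> \<tau>) \<tau>) \<sigma>"
          by (intro add_right_mono I1[OF True])
        also have "\<dots> \<le> awp Cb (\<lambda>\<tau>. I \<tau> + S (c + ?d \<sigma> \<tau>) \<tau>) \<sigma>" by (rule awp_superadd[OF det])
        also have "\<dots> \<le> awp Cb (\<lambda>\<tau>. ?L \<tau> + ?Z (c + ?d \<sigma> \<tau>) \<tau>) \<sigma>"
        proof (rule awp_mono')
          fix \<tau>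
          have "I \<tau> \<le> I \<sigma> + ?d \<sigma> \<tau>" by (rule le_absdiff)
          also have "\<dots> \<le> c + ?d \<sigma> \<tau>" using Ic by (rule add_right_mono)
          finally have "I \<tau> \<le> c + ?d \<sigma> \<tau>" .
          moreover have "c + ?d \<sigma> \<tau> < \<infinity>" using c dfin by (simp add: top.not_eq_extremum[symmetric])
          ultimately show "I \<tau> + S (c + ?d \<sigma> \<tau>) \<tau> \<le> ?L \<tau> + ?Z (c + ?d \<sigma> \<tau>) \<tau>" using IH by blast
        qed
        also have "\<dots> \<le> awp Cb ?L \<sigma> + awp Cb (\<lambda>\<tau>. ?Z (c + ?d \<sigma> \<tau>) \<tau>) \<sigma>" by (rule awp_subadd)
        also have "\<dots> = ?L \<sigma> + ?Z c \<sigma>"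
          using True lfp_Fa_unfold[of \<phi> Cb f \<sigma>] lfp_Th_unfold[of \<phi> Cb I c \<sigma>] by simp
        finally show ?thesis .
      qed
    qed
  next
    fix M :: "(ennreal \<Rightarrow> state \<Rightarrow> ennreal) set"
    assume IH: "\<forall>S\<in>M. \<forall>c \<sigma>. c < \<infinity> \<longrightarrow> I \<sigma> \<le> c \<longrightarrow> I \<sigma> + S c \<sigma> \<le> ?L \<sigma> + ?Z c \<sigma>"
    show "\<forall>c \<sigma>. c < \<infinity> \<longrightarrow> I \<sigma> \<le> c \<longrightarrow> I \<sigma> + Sup M c \<sigma> \<le> ?L \<sigma> + ?Z c \<sigma>"
    proof (intro allI impI)
      fix c :: ennreal and \<sigma> assume c: "c < \<infinity>" and Ic: "I \<sigma> \<le> c"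
      show "I \<sigma> + Sup M c \<sigma> \<le> ?L \<sigma> + ?Z c \<sigma>"
      proof (cases "M = {}")
        case True
        have "I \<sigma> \<le> ?Z c \<sigma>" using Ic Zc[OF c] order_trans by blast
        then show ?thesis using True by (simp add: bot_ennreal add_increasing)
      next
        case False
        have "I \<sigma> + Sup M c \<sigma> = (SUP S\<in>M. I \<sigma> + S c \<sigma>)"
          by (simp add: ennreal_SUP_add_right[OF False] image_image)
        also have "\<dots> \<le> ?L \<sigma> + ?Z c \<sigma>" using IH c Ic by (auto intro!: SUP_least)
        finally show ?thesis .
      qed
    qed
  qed
  have "I \<sigma> + ?Z (I \<sigma>) \<sigma> \<le> ?L \<sigma> + ?Z (I \<sigma>) \<sigma>" using OST Ifin by blast
  then have "?Z (I \<sigma>) \<sigma> + I \<sigma> \<le> ?Z (I \<sigma>) \<sigma> + ?L \<sigma>" by (simp add: add.commute)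
  then have "I \<sigma> \<le> ?L \<sigma>" using Zfin[of "I \<sigma>" \<sigma>] Ifin
    by (simp add: ennreal_add_left_cancel_le top.not_eq_extremum[symmetric])
  then show ?thesis by (simp add: awp_While)
qed


lemma det_lower:
  assumes LB: "\<And>\<phi> Db I f. isdet Db \<Longrightarrow> wf_prog Db \<Longrightarrow> (\<forall>\<sigma>. awp_star Db I \<sigma> \<le> awp Db I \<sigma>)
                 \<Longrightarrow> P (While \<phi> Db I) f \<Longrightarrow> \<forall>\<sigma>. I \<sigma> \<le> awp (While \<phi> Db I) f \<sigma>"
  shows "isdet C \<Longrightarrow> wf_prog C \<Longrightarrow> vc P C f \<Longrightarrow> \<forall>\<sigma>. awp_star C f \<sigma> \<le> awp C f \<sigma>"
proof (induction C arbitrary: f)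
  case (Seq C1 C2)
  show ?case
  proof
    fix \<sigma>
    have h1: "\<forall>\<sigma>. awp_star C1 (awp_star C2 f) \<sigma> \<le> awp C1 (awp_star C2 f) \<sigma>"
      using Seq.IH(1) Seq.prems by auto
    have h2: "\<forall>\<sigma>. awp_star C2 f \<sigma> \<le> awp C2 f \<sigma>" using Seq.IH(2) Seq.prems by auto
    have "awp_star C1 (awp_star C2 f) \<sigma> \<le> awp C1 (awp_star C2 f) \<sigma>" using h1 by blast
    also have "\<dots> \<le> awp C1 (awp C2 f) \<sigma>" using h2 by (intro awp_mono') blast
    finally show "awp_star (Seq C1 C2) f \<sigma> \<le> awp (Seq C1 C2) f \<sigma>" by simp
  qed
next
  case (GChoice p1 C1 p2 C2)
  have h1: "\<forall>\<sigma>. awp_star C1 f \<sigma> \<le> awp C1 f \<sigma>" using GChoice.IH(1) GChoice.prems by auto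
  have h2: "\<forall>\<sigma>. awp_star C2 f \<sigma> \<le> awp C2 f \<sigma>" using GChoice.IH(2) GChoice.prems by auto
  show ?case
  proof
    fix \<sigma>
    have "iver p1 \<sigma> * awp_star C1 f \<sigma> \<le> iver p1 \<sigma> * awp C1 f \<sigma>"
         "iver p2 \<sigma> * awp_star C2 f \<sigma> \<le> iver p2 \<sigma> * awp C2 f \<sigma>"
      using h1 h2 by (auto intro: mult_left_mono)
    then have "max (iver p1 \<sigma> * awp_star C1 f \<sigma>) (iver p2 \<sigma> * awp_star C2 f \<sigma>)
             \<le> max (iver p1 \<sigma> * awp C1 f \<sigma>) (iver p2 \<sigma> * awp C2 f \<sigma>)" by (rule max.mono)
    then show "awp_star (GChoice p1 C1 p2 C2) f \<sigma> \<le> awp (GChoice p1 C1 p2 C2) f \<sigma>" by simp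
  qed
next
  case (PChoice C1 p C2)
  have h1: "\<forall>\<sigma>. awp_star C1 f \<sigma> \<le> awp C1 f \<sigma>" using PChoice.IH(1) PChoice.prems by auto
  have h2: "\<forall>\<sigma>. awp_star C2 f \<sigma> \<le> awp C2 f \<sigma>" using PChoice.IH(2) PChoice.prems by auto
  show ?case using h1 h2 by (auto intro!: add_mono mult_left_mono)
next
  case (While \<phi> Db I)
  have h: "\<forall>\<sigma>. awp_star Db I \<sigma> \<le> awp Db I \<sigma>" using While.IH While.prems by auto
  have "isdet Db" "wf_prog Db" "P (While \<phi> Db I) f" using While.prems by auto
  then show ?case using LB h by simp
qed (auto simp: subst_def)

lemma main_lower:
  assumes LB: "\<And>\<phi> Db I f. isdet Db \<Longrightarrow> wf_prog Db \<Longrightarrow> (\<forall>\<sigma>. awp_star Db I \<sigma> \<le> awp Db I \<sigma>)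
                 \<Longrightarrow> P (While \<phi> Db I) f \<Longrightarrow> \<forall>\<sigma>. I \<sigma> \<le> awp (While \<phi> Db I) f \<sigma>"
  and LT: "\<And>\<phi> Cb C'' I f. wf_prog Cb \<Longrightarrow> rf C'' Cb \<Longrightarrow> awp_star C'' I = awp_star Cb I
                 \<Longrightarrow> P (While \<phi> Cb I) f \<Longrightarrow> P (While \<phi> C'' I) f"
  shows "yields_lower_bounds_awp P \<and> trans_preserves P"
proof
  have VP: "vc P C' f" if "wf_prog C" "vc P C f" "rf C' (trans_awp C f)" for C f C'
    using LT that by (rule vc_preserve)
  show "trans_preserves P"
    unfolding trans_preserves_def
    using VP impl_rf by blast
  show "yields_lower_bounds_awp P"
    unfolding yields_lower_bounds_awp_def
  proof (intro allI impI)
    fix C f assume wf: "wf_prog C" and vcC: "vc P C f"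
    let ?T = "trans_awp C f"
    let ?D = "detp ?T"
    have rT: "rf ?T C" using wf by (rule trans_rf)
    have wT: "wf_prog ?T" using rT by (rule rf_wf)
    have rDT: "rf ?D ?T" using wT by (rule detp_rf)
    have rDC: "rf ?D C" using rDT rT by (rule rf_trans)
    have vD: "vc P ?D f" using VP[OF wf vcC rDT] .
    have eD: "awp_star ?D f = awp_star C f" using rDT by (rule awp_star_trans)
    have wD: "wf_prog ?D" using rDT by (rule rf_wf)
    have dD: "isdet ?D" by (rule detp_isdet)
    have l: "\<forall>\<sigma>. awp_star ?D f \<sigma> \<le> awp ?D f \<sigma>" using det_lower[OF LB dD wD vD] .
    have m: "\<forall>\<sigma>. awp ?D f \<sigma> \<le> awp C f \<sigma>" using rf_awp[OF rDC] by blast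
    show "awp_star C f \<le> awp C f"
      using l m eD by (auto simp: le_fun_def intro: order_trans)
  qed
qed

lemma LT_dast: "wf_prog Cb \<Longrightarrow> rf C'' Cb \<Longrightarrow> awp_star C'' I = awp_star Cb I
                 \<Longrightarrow> dASTSUBINV (While \<phi> Cb I) f \<Longrightarrow> dASTSUBINV (While \<phi> C'' I) f"
proof -
  assume wf: "wf_prog Cb" and r: "rf C'' Cb" and e: "awp_star C'' I = awp_star Cb I"
    and P: "dASTSUBINV (While \<phi> Cb I) f"
  have rl: "rf (While \<phi> C'' I) (While \<phi> Cb I)" using r by simp
  have wl: "wf_prog (While \<phi> C'' I)" using rl by (rule rf_wf)
  have d: "dwp (While \<phi> Cb I) (\<lambda>_. 1) = (\<lambda>_. 1)" using P by (simp add: dAST_def)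
  have "dwp (While \<phi> C'' I) (\<lambda>_. 1) = (\<lambda>_. 1)"
  proof
    fix \<sigma>
    have "dwp (While \<phi> Cb I) (\<lambda>_. 1) \<sigma> \<le> dwp (While \<phi> C'' I) (\<lambda>_. 1) \<sigma>" using rf_dwp[OF rl] by blast
    moreover have "dwp (While \<phi> C'' I) (\<lambda>_. 1) \<sigma> \<le> 1" using dwp_const_pt[OF wl] by auto
    ultimately show "dwp (While \<phi> C'' I) (\<lambda>_. 1) \<sigma> = 1" using d by (metis antisym)
  qed
  then show ?thesis using P e by (simp add: dAST_def)
qed

lemma LT_dpast: "wf_prog Cb \<Longrightarrow> rf C'' Cb \<Longrightarrow> awp_star C'' I = awp_star Cb I
                 \<Longrightarrow> dPASTSUBINV (While \<phi> Cb I) f \<Longrightarrow> dPASTSUBINV (While \<phi> C'' I) f"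
proof -
  assume wf: "wf_prog Cb" and r: "rf C'' Cb" and e: "awp_star C'' I = awp_star Cb I"
    and P: "dPASTSUBINV (While \<phi> Cb I) f"
  have rl: "rf (While \<phi> C'' I) (While \<phi> Cb I)" using r by simp
  have a: "\<And>g \<sigma>. awp C'' g \<sigma> \<le> awp Cb g \<sigma>" using rf_awp[OF r] by blast
  have dp: "dPAST (While \<phi> Cb I)" using P by simp
  have "dPAST (While \<phi> C'' I)"
    unfolding dPAST_def
  proof
    fix \<sigma>
    have "ert (While \<phi> C'' I) (\<lambda>_. 0) \<sigma> \<le> ert (While \<phi> Cb I) (\<lambda>_. 0) \<sigma>" using rf_ert[OF rl] by blast
    moreover have "ert (While \<phi> Cb I) (\<lambda>_. 0) \<sigma> < \<infinity>" using dp by (simp add: dPAST_def)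
    ultimately show "ert (While \<phi> C'' I) (\<lambda>_. 0) \<sigma> < \<infinity>" by (rule le_less_trans)
  qed
  moreover have "suitable_OST (While \<phi> C'' I) f"
  proof -
    obtain I' b where h: "I = (\<lambda>\<sigma>. iver \<phi> \<sigma> * I' \<sigma> + iver (\<lambda>\<tau>. \<not> \<phi> \<tau>) \<sigma> * f \<sigma>)"
      "\<forall>\<sigma>. f \<sigma> < \<infinity> \<and> I \<sigma> < \<infinity> \<and>
          iver \<phi> \<sigma> * awp Cb I \<sigma> + iver (\<lambda>\<tau>. \<not> \<phi> \<tau>) \<sigma> * f \<sigma> < \<infinity>"
      "0 \<le> b" "\<forall>\<sigma>. iver \<phi> \<sigma> * awp Cb (\<lambda>\<tau>. absdiff (I \<tau>) (I \<sigma>)) \<sigma> \<le> ennreal b"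
      using P by auto
    have "\<forall>\<sigma>. f \<sigma> < \<infinity> \<and> I \<sigma> < \<infinity> \<and>
          iver \<phi> \<sigma> * awp C'' I \<sigma> + iver (\<lambda>\<tau>. \<not> \<phi> \<tau>) \<sigma> * f \<sigma> < \<infinity>"
    proof
      fix \<sigma>
      have "iver \<phi> \<sigma> * awp C'' I \<sigma> + iver (\<lambda>\<tau>. \<not> \<phi> \<tau>) \<sigma> * f \<sigma> \<le> iver \<phi> \<sigma> * awp Cb I \<sigma> + iver (\<lambda>\<tau>. \<not> \<phi> \<tau>) \<sigma> * f \<sigma>"
        using a by (intro add_right_mono mult_left_mono) auto
      then show "f \<sigma> < \<infinity> \<and> I \<sigma> < \<infinity> \<and>
          iver \<phi> \<sigma> * awp C'' I \<sigma> + iver (\<lambda>\<tau>. \<not> \<phi> \<tau>) \<sigma> * f \<sigma> < \<infinity>"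
        using h(2) le_less_trans by blast
    qed
    moreover have "\<forall>\<sigma>. iver \<phi> \<sigma> * awp C'' (\<lambda>\<tau>. absdiff (I \<tau>) (I \<sigma>)) \<sigma> \<le> ennreal b"
    proof
      fix \<sigma>
      have "iver \<phi> \<sigma> * awp C'' (\<lambda>\<tau>. absdiff (I \<tau>) (I \<sigma>)) \<sigma> \<le> iver \<phi> \<sigma> * awp Cb (\<lambda>\<tau>. absdiff (I \<tau>) (I \<sigma>)) \<sigma>"
        using a by (intro mult_left_mono) auto
      then show "iver \<phi> \<sigma> * awp C'' (\<lambda>\<tau>. absdiff (I \<tau>) (I \<sigma>)) \<sigma> \<le> ennreal b"
        using h(4) order_trans by blast
    qed
    ultimately show ?thesis using h(1) h(3) by auto
  qed
  ultimately show ?thesis using P e by simp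
qed

lemma LB_dast: "isdet Db \<Longrightarrow> wf_prog Db \<Longrightarrow> (\<forall>\<sigma>. awp_star Db I \<sigma> \<le> awp Db I \<sigma>)
                 \<Longrightarrow> dASTSUBINV (While \<phi> Db I) f \<Longrightarrow> \<forall>\<sigma>. I \<sigma> \<le> awp (While \<phi> Db I) f \<sigma>"
proof
  fix \<sigma>
  assume det: "isdet Db" and wf: "wf_prog Db" and ih: "\<forall>\<sigma>. awp_star Db I \<sigma> \<le> awp Db I \<sigma>"
    and P: "dASTSUBINV (While \<phi> Db I) f"
  have wl: "wf_prog (While \<phi> Db I)" using wf by simp
  obtain b where b: "0 \<le> b" "\<forall>\<sigma>. I \<sigma> \<le> ennreal b" using P by auto
  have trm: "\<forall>\<sigma>. 1 \<le> awp (While \<phi> Db I) (\<lambda>_. 1) \<sigma>"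
  proof
    fix \<sigma>
    have "dwp (While \<phi> Db I) (\<lambda>_. 1) \<sigma> = 1" using P by (simp add: dAST_def)
    then show "1 \<le> awp (While \<phi> Db I) (\<lambda>_. 1) \<sigma>" using dwp_le_awp[OF wl] by metis
  qed
  show "I \<sigma> \<le> awp (While \<phi> Db I) f \<sigma>"
    by (rule loop_dast[OF det wf _ ih trm b(1)]) (use P b in auto)
qed

lemma LB_dpast: "isdet Db \<Longrightarrow> wf_prog Db \<Longrightarrow> (\<forall>\<sigma>. awp_star Db I \<sigma> \<le> awp Db I \<sigma>)
                 \<Longrightarrow> dPASTSUBINV (While \<phi> Db I) f \<Longrightarrow> \<forall>\<sigma>. I \<sigma> \<le> awp (While \<phi> Db I) f \<sigma>"
proof
  fix \<sigma>
  assume det: "isdet Db" and wf: "wf_prog Db" and ih: "\<forall>\<sigma>. awp_star Db I \<sigma> \<le> awp Db I \<sigma>"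
    and P: "dPASTSUBINV (While \<phi> Db I) f"
  obtain I' b where h: "I = (\<lambda>\<sigma>. iver \<phi> \<sigma> * I' \<sigma> + iver (\<lambda>\<tau>. \<not> \<phi> \<tau>) \<sigma> * f \<sigma>)"
      "\<forall>\<sigma>. f \<sigma> < \<infinity> \<and> I \<sigma> < \<infinity> \<and>
          iver \<phi> \<sigma> * awp Db I \<sigma> + iver (\<lambda>\<tau>. \<not> \<phi> \<tau>) \<sigma> * f \<sigma> < \<infinity>"
      "0 \<le> b" "\<forall>\<sigma>. iver \<phi> \<sigma> * awp Db (\<lambda>\<tau>. absdiff (I \<tau>) (I \<sigma>)) \<sigma> \<le> ennreal b"
    using P by auto
  have shape: "\<forall>\<sigma>. \<not> \<phi> \<sigma> \<longrightarrow> I \<sigma> = f \<sigma>" using h(1) by simp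
  have fin: "\<forall>\<sigma>. I \<sigma> < \<infinity>" using h(2) by blast
  have rt: "\<forall>\<sigma>. ert (While \<phi> Db I) (\<lambda>_. 0) \<sigma> < \<infinity>" using P by (simp add: dPAST_def)
  have sub: "\<forall>\<sigma>. iver \<phi> \<sigma> * awp_star Db I \<sigma> + iver (\<lambda>\<tau>. \<not> \<phi> \<tau>) \<sigma> * f \<sigma> \<ge> I \<sigma>" using P by simp
  show "I \<sigma> \<le> awp (While \<phi> Db I) f \<sigma>"
    by (rule loop_dpast[OF det wf sub ih shape fin h(3) h(4) rt])
qed

theorem theorem6p9:
  shows "yields_lower_bounds_awp dASTSUBINV \<and> trans_preserves dASTSUBINV \<and>
         yields_lower_bounds_awp dPASTSUBINV \<and> trans_preserves dPASTSUBINV"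
proof -
  have A: "yields_lower_bounds_awp dASTSUBINV \<and> trans_preserves dASTSUBINV"
    using LB_dast LT_dast by (rule main_lower)
  have B: "yields_lower_bounds_awp dPASTSUBINV \<and> trans_preserves dPASTSUBINV"
    using LB_dpast LT_dpast by (rule main_lower)
  show ?thesis using A B by blast
qed

end
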